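(* Let $A$ be a basic connected finite dimensional algebra over an algebraically closed field $k$ with ordinary quiver $Q$ without oriented cycles. Let $\nu\colon kQ\twoheadrightarrow A$ be a presentation, $\varphi_{\alpha,u,\tau}$ a transvection of $kQ$, and $\mu:=\nu\circ\varphi_{\alpha,u,\tau}$. Set $I=\mathsf{Ker}(\nu)$, $J=\mathsf{Ker}(\mu)$ (so $I=\varphi_{\alpha,u,\tau}(J)$). Suppose $\alpha\sim_J u$, and let $p\colon\pi_1(Q,I)\twoheadrightarrow\pi_1(Q,J)$, $[\gamma]_I\mapsto[\gamma]_J$, be the surjective group homomorphism induced by the identity on walks. Then $\theta_\mu=\theta_\nu\circ p^*$, where $p^*\colon\mathsf{Hom}(\pi_1(Q,J),k^+)\hookrightarrow\mathsf{Hom}(\pi_1(Q,I),k^+)$, $f\mapsto f\circ p$. In particular $\mathsf{Im}(\theta_\mu)\subseteq\mathsf{Im}(\theta_\nu)$.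
   Context: Fix a complete set $e_1,\dots,e_n$ of primitive orthogonal idempotents of $A$ indexed by $Q_0=\{1,\dots,n\}$, $E=\bigoplus ke_i$. A presentation is a surjective algebra map $\nu\colon kQ\twoheadrightarrow A$ with admissible kernel ($(kQ^+)^N\subseteq\mathsf{Ker}\,\nu\subseteq(kQ^+)^2$ for some $N\ge2$, $kQ^+$ the arrow ideal) and $\nu(e_i)=e_i$. A bypass is a pair $(\alpha,u)$ with $\alpha$ an arrow and $u$ an oriented path parallel to and distinct from $\alpha$; for $\tau\in k$ the transvection $\varphi_{\alpha,u,\tau}$ is the automorphism of $kQ$ fixing all $e_i$ and all arrows other than $\alpha$ and mapping $\alpha$ to $\alpha+\tau u$. Walks: paths with formal inverse arrows allowed. $\sim_I$ is the smallest equivalence relation on walks with $\alpha\alpha^{-1}\sim_I e_y$, $\alpha^{-1}\alpha\sim_I e_x$ for arrows $\alpha\colon x\to y$, compatible with concatenation, and identifying two paths occurring with nonzero coefficient in a same minimal relation of $I$ (a nonzero $\sum t_iu_i\in I$, $t_i\neq0$, distinct paths, no nonempty proper subsum in $I$). $\pi_1(Q,I)$ is the group of classes of closed walks at a fixed vertex $x_0$. It is known that under the hypothesis $\alpha\sim_J u$ the relation $\sim_I$ is finer than $\sim_J$, so $p$ is well defined and surjective. $\mathsf{HH}^1(A)=Der_0(A)/Int_0(A)$, with $Der_0(A)$ the derivations vanishing on all $e_i$ and $Int_0(A)=\{a\mapsto ea-ae\mid e\in E\}$. Fix a maximal tree $T$ of $Q$, $\gamma_x$ the minimal walk in $T$ from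 $x_0$ to $x$. For a presentation $\nu$ with kernel $I$ and group homomorphism $f\colon\pi_1(Q,I)\to k^+$, $\theta_\nu(f)$ is the class of the derivation $\tilde f$ with $\tilde f(\nu(u))=f([\gamma_y^{-1}u\gamma_x]_I)\nu(u)$ for paths $u$ from $x$ to $y$. *)

theory Defs
  imports "HOL-Computational_Algebra.Polynomial" "HOL-Algebra.Group"
begin

definition alg_closed :: "'k::field itself \<Rightarrow> bool" where
  "alg_closed _ \<longleftrightarrow> (\<forall>p::'k poly. degree p \<ge> 1 \<longrightarrow> (\<exists>x. poly p x = 0))"

definition k_algebra :: "('k::field \<Rightarrow> 'a::ring_1 \<Rightarrow> 'a) \<Rightarrow> bool" where
  "k_algebra sm \<longleftrightarrow> vector_space sm \<and>
     (\<forall>c a b. sm c (a * b) = sm c a * b \<and> sm c (a * b) = a * sm c b)"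

record ('v, 'e) quiver =
  verts :: "'v set"
  arrs :: "'e set"
  src :: "'e \<Rightarrow> 'v"
  tgt :: "'e \<Rightarrow> 'v"

definition finite_quiver :: "('v, 'e) quiver \<Rightarrow> bool" where
  "finite_quiver Q \<longleftrightarrow> finite (verts Q) \<and> finite (arrs Q) \<and>
     (\<forall>b\<in>arrs Q. src Q b \<in> verts Q \<and> tgt Q b \<in> verts Q)"

text \<open>A walk is a start vertex plus a list of steps in travel order;
  a step (b, True) traverses the arrow b, a step (b, False) traverses its formal inverse.\<close>
fun step_src :: "('v, 'e) quiver \<Rightarrow> 'e \<times> bool \<Rightarrow> 'v" where
  "step_src Q (b, d) = (if d then src Q b else tgt Q b)"

fun step_tgt :: "('v, 'e) quiver \<Rightarrow> 'e \<times> bool \<Rightarrow> 'v" where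
  "step_tgt Q (b, d) = (if d then tgt Q b else src Q b)"

fun walk_chain :: "('v, 'e) quiver \<Rightarrow> 'e set \<Rightarrow> 'v \<Rightarrow> ('e \<times> bool) list \<Rightarrow> bool" where
  "walk_chain Q T x [] = True"
| "walk_chain Q T x (s # ss) =
     (fst s \<in> T \<and> step_src Q s = x \<and> walk_chain Q T (step_tgt Q s) ss)"

fun walk_end_aux :: "('v, 'e) quiver \<Rightarrow> 'v \<Rightarrow> ('e \<times> bool) list \<Rightarrow> 'v" where
  "walk_end_aux Q x [] = x"
| "walk_end_aux Q x (s # ss) = walk_end_aux Q (step_tgt Q s) ss"

definition is_walk_in :: "('v, 'e) quiver \<Rightarrow> 'e set \<Rightarrow> 'v \<times> ('e \<times> bool) list \<Rightarrow> bool" where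
  "is_walk_in Q T w \<longleftrightarrow> fst w \<in> verts Q \<and> walk_chain Q T (fst w) (snd w)"

definition is_walk :: "('v, 'e) quiver \<Rightarrow> 'v \<times> ('e \<times> bool) list \<Rightarrow> bool" where
  "is_walk Q w \<longleftrightarrow> is_walk_in Q (arrs Q) w"

definition wend :: "('v, 'e) quiver \<Rightarrow> 'v \<times> ('e \<times> bool) list \<Rightarrow> 'v" where
  "wend Q w = walk_end_aux Q (fst w) (snd w)"

definition wconc :: "'v \<times> ('e \<times> bool) list \<Rightarrow> 'v \<times> ('e \<times> bool) list \<Rightarrow> 'v \<times> ('e \<times> bool) list" where
  "wconc w v = (fst w, snd w @ snd v)"

definition winv :: "('v, 'e) quiver \<Rightarrow> 'v \<times> ('e \<times> bool) list \<Rightarrow> 'v \<times> ('e \<times> bool) list" where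
  "winv Q w = (wend Q w, rev (map (\<lambda>(b, d). (b, \<not> d)) (snd w)))"

text \<open>Paths: start vertex plus list of arrows in travel order; (x, []) is the trivial path e_x.\<close>
definition pwalk :: "'v \<times> 'e list \<Rightarrow> 'v \<times> ('e \<times> bool) list" where
  "pwalk p = (fst p, map (\<lambda>b. (b, True)) (snd p))"

definition is_path :: "('v, 'e) quiver \<Rightarrow> 'v \<times> 'e list \<Rightarrow> bool" where
  "is_path Q p \<longleftrightarrow> is_walk Q (pwalk p)"

definition pend :: "('v, 'e) quiver \<Rightarrow> 'v \<times> 'e list \<Rightarrow> 'v" where
  "pend Q p = wend Q (pwalk p)"

definition arrow_path :: "('v, 'e) quiver \<Rightarrow> 'e \<Rightarrow> 'v \<times> 'e list" where
  "arrow_path Q b = (src Q b, [b])"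

definition no_oriented_cycles :: "('v, 'e) quiver \<Rightarrow> bool" where
  "no_oriented_cycles Q \<longleftrightarrow> (\<forall>p. is_path Q p \<and> snd p \<noteq> [] \<longrightarrow> pend Q p \<noteq> fst p)"

definition quiver_connected :: "('v, 'e) quiver \<Rightarrow> bool" where
  "quiver_connected Q \<longleftrightarrow> verts Q \<noteq> {} \<and>
     (\<forall>x\<in>verts Q. \<forall>y\<in>verts Q. \<exists>w. is_walk Q w \<and> fst w = x \<and> wend Q w = y)"

definition reduced_walk :: "'v \<times> ('e \<times> bool) list \<Rightarrow> bool" where
  "reduced_walk w \<longleftrightarrow> (\<forall>i. Suc i < length (snd w) \<longrightarrow>
     \<not> (fst (snd w ! i) = fst (snd w ! Suc i) \<and> snd (snd w ! i) \<noteq> snd (snd w ! Suc i)))"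

text \<open>A maximal tree of a connected quiver: a spanning, connected, acyclic set of arrows.\<close>
definition spanning_tree :: "('v, 'e) quiver \<Rightarrow> 'e set \<Rightarrow> bool" where
  "spanning_tree Q T \<longleftrightarrow> T \<subseteq> arrs Q \<and>
     (\<forall>x\<in>verts Q. \<forall>y\<in>verts Q. \<exists>w. is_walk_in Q T w \<and> fst w = x \<and> wend Q w = y) \<and>
     \<not> (\<exists>w. is_walk_in Q T w \<and> wend Q w = fst w \<and> snd w \<noteq> [] \<and> reduced_walk w)"

definition tree_walks :: "('v, 'e) quiver \<Rightarrow> 'v \<Rightarrow> ('v \<Rightarrow> 'v \<times> ('e \<times> bool) list) \<Rightarrow> bool" where
  "tree_walks Q x0 \<gamma> \<longleftrightarrow> (\<exists>T. spanning_tree Q T \<and>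
     (\<forall>x\<in>verts Q. is_walk_in Q T (\<gamma> x) \<and> fst (\<gamma> x) = x0 \<and> wend Q (\<gamma> x) = x \<and>
        (\<forall>w. is_walk_in Q T w \<and> fst w = x0 \<and> wend Q w = x \<longrightarrow>
              length (snd (\<gamma> x)) \<le> length (snd w))))"

text \<open>Elements of kQ: finitely supported k-valued functions on paths of Q.\<close>
definition kQ :: "('v, 'e) quiver \<Rightarrow> ('v \<times> 'e list \<Rightarrow> 'k::field) set" where
  "kQ Q = {f. (\<forall>p. f p \<noteq> 0 \<longrightarrow> is_path Q p) \<and> finite {p. f p \<noteq> 0}}"

definition bp :: "'v \<times> 'e list \<Rightarrow> 'v \<times> 'e list \<Rightarrow> 'k::field" where
  "bp p = (\<lambda>w. if w = p then 1 else 0)"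

definition kq_add :: "('v \<times> 'e list \<Rightarrow> 'k::field) \<Rightarrow> ('v \<times> 'e list \<Rightarrow> 'k) \<Rightarrow> 'v \<times> 'e list \<Rightarrow> 'k" where
  "kq_add f g = (\<lambda>w. f w + g w)"

definition kq_smult :: "'k::field \<Rightarrow> ('v \<times> 'e list \<Rightarrow> 'k) \<Rightarrow> 'v \<times> 'e list \<Rightarrow> 'k" where
  "kq_smult c f = (\<lambda>w. c * f w)"

text \<open>pcomp v u is the paper's product vu: first u, then v.\<close>
definition pcomp :: "'v \<times> 'e list \<Rightarrow> 'v \<times> 'e list \<Rightarrow> 'v \<times> 'e list" where
  "pcomp v u = (fst u, snd u @ snd v)"

definition kq_mult :: "('v, 'e) quiver \<Rightarrow> ('v \<times> 'e list \<Rightarrow> 'k::field) \<Rightarrow> ('v \<times> 'e list \<Rightarrow> 'k)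
    \<Rightarrow> 'v \<times> 'e list \<Rightarrow> 'k" where
  "kq_mult Q f g = (\<lambda>w. \<Sum>(v, u)\<in>{(v, u). is_path Q v \<and> is_path Q u \<and> fst v = pend Q u \<and> pcomp v u = w}.
      f v * g u)"

definition kq_one :: "('v, 'e) quiver \<Rightarrow> 'v \<times> 'e list \<Rightarrow> 'k::field" where
  "kq_one Q = (\<lambda>w. if fst w \<in> verts Q \<and> snd w = [] then 1 else 0)"

text \<open>(kQ^+)^N: the span of the paths of length at least N.\<close>
definition arrow_pow :: "('v, 'e) quiver \<Rightarrow> nat \<Rightarrow> ('v \<times> 'e list \<Rightarrow> 'k::field) set" where
  "arrow_pow Q N = {f \<in> kQ Q. \<forall>p. f p \<noteq> 0 \<longrightarrow> length (snd p) \<ge> N}"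

definition kerP :: "('v, 'e) quiver \<Rightarrow> (('v \<times> 'e list \<Rightarrow> 'k::field) \<Rightarrow> 'a::zero)
    \<Rightarrow> ('v \<times> 'e list \<Rightarrow> 'k) set" where
  "kerP Q \<nu> = {f \<in> kQ Q. \<nu> f = 0}"

text \<open>A presentation: surjective algebra map kQ -> A with admissible kernel, fixing the e_i.\<close>
definition presentation :: "('v, 'e) quiver \<Rightarrow> ('v \<Rightarrow> 'a::ring_1) \<Rightarrow> ('k::field \<Rightarrow> 'a \<Rightarrow> 'a)
    \<Rightarrow> (('v \<times> 'e list \<Rightarrow> 'k) \<Rightarrow> 'a) \<Rightarrow> bool" where
  "presentation Q eA sm \<nu> \<longleftrightarrow>
     (\<forall>f\<in>kQ Q. \<forall>g\<in>kQ Q. \<nu> (kq_add f g) = \<nu> f + \<nu> g \<and> \<nu> (kq_mult Q f g) = \<nu> f * \<nu> g) \<and>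
     (\<forall>c. \<forall>f\<in>kQ Q. \<nu> (kq_smult c f) = sm c (\<nu> f)) \<and>
     \<nu> (kq_one Q) = 1 \<and>
     \<nu> ` kQ Q = UNIV \<and>
     (\<forall>x\<in>verts Q. \<nu> (bp (x, [])) = eA x) \<and>
     (\<exists>N\<ge>2. arrow_pow Q N \<subseteq> kerP Q \<nu> \<and> kerP Q \<nu> \<subseteq> arrow_pow Q 2)"

definition bypass :: "('v, 'e) quiver \<Rightarrow> 'e \<Rightarrow> 'v \<times> 'e list \<Rightarrow> bool" where
  "bypass Q a u \<longleftrightarrow> a \<in> arrs Q \<and> is_path Q u \<and> fst u = src Q a \<and> pend Q u = tgt Q a \<and>
     u \<noteq> arrow_path Q a"

definition phi_arrow :: "('v, 'e) quiver \<Rightarrow> 'e \<Rightarrow> 'v \<times> 'e list \<Rightarrow> 'k::field \<Rightarrow> 'e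
    \<Rightarrow> 'v \<times> 'e list \<Rightarrow> 'k" where
  "phi_arrow Q a u t b = (if b = a then kq_add (bp (arrow_path Q a)) (kq_smult t (bp u))
                          else bp (arrow_path Q b))"

fun phi_list :: "('v, 'e) quiver \<Rightarrow> 'e \<Rightarrow> 'v \<times> 'e list \<Rightarrow> 'k::field \<Rightarrow> 'v \<Rightarrow> 'e list
    \<Rightarrow> 'v \<times> 'e list \<Rightarrow> 'k" where
  "phi_list Q a u t x [] = bp (x, [])"
| "phi_list Q a u t x (b # bs) = kq_mult Q (phi_list Q a u t (tgt Q b) bs) (phi_arrow Q a u t b)"

definition transv :: "('v, 'e) quiver \<Rightarrow> 'e \<Rightarrow> 'v \<times> 'e list \<Rightarrow> 'k::field
    \<Rightarrow> ('v \<times> 'e list \<Rightarrow> 'k) \<Rightarrow> 'v \<times> 'e list \<Rightarrow> 'k" where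
  "transv Q a u t f = (\<lambda>w. \<Sum>p\<in>{p. f p \<noteq> 0}. f p * phi_list Q a u t (fst p) (snd p) w)"

definition minrel :: "('v, 'e) quiver \<Rightarrow> ('v \<times> 'e list \<Rightarrow> 'k::field) set
    \<Rightarrow> ('v \<times> 'e list \<Rightarrow> 'k) \<Rightarrow> bool" where
  "minrel Q I f \<longleftrightarrow> f \<in> I \<and> f \<noteq> (\<lambda>_. 0) \<and>
     (\<forall>S. S \<subseteq> {p. f p \<noteq> 0} \<and> S \<noteq> {} \<and> S \<noteq> {p. f p \<noteq> 0} \<longrightarrow>
          (\<lambda>w. if w \<in> S then f w else 0) \<notin> I)"

inductive wrel :: "('v, 'e) quiver \<Rightarrow> ('v \<times> 'e list \<Rightarrow> 'k::field) set
    \<Rightarrow> 'v \<times> ('e \<times> bool) list \<Rightarrow> 'v \<times> ('e \<times> bool) list \<Rightarrow> bool"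
  for Q :: "('v, 'e) quiver" and I :: "('v \<times> 'e list \<Rightarrow> 'k::field) set" where
  wrel_refl: "is_walk Q w \<Longrightarrow> wrel Q I w w"
| wrel_sym: "wrel Q I w v \<Longrightarrow> wrel Q I v w"
| wrel_trans: "wrel Q I w v \<Longrightarrow> wrel Q I v z \<Longrightarrow> wrel Q I w z"
| wrel_cancel1: "b \<in> arrs Q \<Longrightarrow> wrel Q I (tgt Q b, [(b, False), (b, True)]) (tgt Q b, [])"
| wrel_cancel2: "b \<in> arrs Q \<Longrightarrow> wrel Q I (src Q b, [(b, True), (b, False)]) (src Q b, [])"
| wrel_minrel: "minrel Q I f \<Longrightarrow> f p \<noteq> 0 \<Longrightarrow> f q \<noteq> 0 \<Longrightarrow> wrel Q I (pwalk p) (pwalk q)"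
| wrel_conc: "wrel Q I w w' \<Longrightarrow> wrel Q I v v' \<Longrightarrow> wend Q w = fst v \<Longrightarrow> wend Q w' = fst v' \<Longrightarrow>
     wrel Q I (wconc w v) (wconc w' v')"

definition wclass :: "('v, 'e) quiver \<Rightarrow> ('v \<times> 'e list \<Rightarrow> 'k::field) set
    \<Rightarrow> 'v \<times> ('e \<times> bool) list \<Rightarrow> ('v \<times> ('e \<times> bool) list) set" where
  "wclass Q I w = {v. wrel Q I w v}"

definition pi1 :: "('v, 'e) quiver \<Rightarrow> ('v \<times> 'e list \<Rightarrow> 'k::field) set \<Rightarrow> 'v
    \<Rightarrow> ('v \<times> ('e \<times> bool) list) set monoid" where
  "pi1 Q I x0 = \<lparr>carrier = {wclass Q I w | w. is_walk Q w \<and> fst w = x0 \<and> wend Q w = x0},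
      monoid.mult = (\<lambda>C D. {z. \<exists>w\<in>C. \<exists>v\<in>D. wrel Q I (wconc w v) z}),
      one = wclass Q I (x0, [])\<rparr>"

definition kplus :: "'k::field monoid" where
  "kplus = \<lparr>carrier = UNIV, monoid.mult = (+), one = 0\<rparr>"

definition pmap :: "('v, 'e) quiver \<Rightarrow> ('v \<times> 'e list \<Rightarrow> 'k::field) set
    \<Rightarrow> ('v \<times> ('e \<times> bool) list) set \<Rightarrow> ('v \<times> ('e \<times> bool) list) set" where
  "pmap Q J C = {z. \<exists>w\<in>C. wrel Q J w z}"

definition Der0 :: "('v, 'e) quiver \<Rightarrow> ('v \<Rightarrow> 'a::ring_1) \<Rightarrow> ('k::field \<Rightarrow> 'a \<Rightarrow> 'a)
    \<Rightarrow> ('a \<Rightarrow> 'a) set" where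
  "Der0 Q eA sm = {D. (\<forall>a b. D (a + b) = D a + D b) \<and> (\<forall>c a. D (sm c a) = sm c (D a)) \<and>
       (\<forall>a b. D (a * b) = D a * b + a * D b) \<and> (\<forall>x\<in>verts Q. D (eA x) = 0)}"

definition Eset :: "('v, 'e) quiver \<Rightarrow> ('v \<Rightarrow> 'a::ring_1) \<Rightarrow> ('k::field \<Rightarrow> 'a \<Rightarrow> 'a) \<Rightarrow> 'a set" where
  "Eset Q eA sm = {\<Sum>x\<in>verts Q. sm (c x) (eA x) | c. True}"

definition Int0 :: "('v, 'e) quiver \<Rightarrow> ('v \<Rightarrow> 'a::ring_1) \<Rightarrow> ('k::field \<Rightarrow> 'a \<Rightarrow> 'a)
    \<Rightarrow> ('a \<Rightarrow> 'a) set" where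
  "Int0 Q eA sm = {(\<lambda>a. e * a - a * e) | e. e \<in> Eset Q eA sm}"

text \<open>The class in HH^1(A) = Der0/Int0 of a derivation D, as a set of derivations.\<close>
definition hh1_class :: "('v, 'e) quiver \<Rightarrow> ('v \<Rightarrow> 'a::ring_1) \<Rightarrow> ('k::field \<Rightarrow> 'a \<Rightarrow> 'a)
    \<Rightarrow> ('a \<Rightarrow> 'a) \<Rightarrow> ('a \<Rightarrow> 'a) set" where
  "hh1_class Q eA sm D = {D'. D' \<in> Der0 Q eA sm \<and> (\<lambda>a. D' a - D a) \<in> Int0 Q eA sm}"

definition ftilde :: "('v, 'e) quiver \<Rightarrow> ('v \<Rightarrow> 'a::ring_1) \<Rightarrow> ('k::field \<Rightarrow> 'a \<Rightarrow> 'a)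
    \<Rightarrow> (('v \<times> 'e list \<Rightarrow> 'k) \<Rightarrow> 'a) \<Rightarrow> 'v \<Rightarrow> ('v \<Rightarrow> 'v \<times> ('e \<times> bool) list)
    \<Rightarrow> (('v \<times> ('e \<times> bool) list) set \<Rightarrow> 'k) \<Rightarrow> ('a \<Rightarrow> 'a) \<Rightarrow> bool" where
  "ftilde Q eA sm \<nu> x0 \<gamma> f D \<longleftrightarrow> D \<in> Der0 Q eA sm \<and>
     (\<forall>u. is_path Q u \<longrightarrow>
        D (\<nu> (bp u)) = sm (f (wclass Q (kerP Q \<nu>)
                               (wconc (wconc (\<gamma> (fst u)) (pwalk u)) (winv Q (\<gamma> (pend Q u))))))
                          (\<nu> (bp u)))"

definition theta :: "('v, 'e) quiver \<Rightarrow> ('v \<Rightarrow> 'a::ring_1) \<Rightarrow> ('k::field \<Rightarrow> 'a \<Rightarrow> 'a)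
    \<Rightarrow> (('v \<times> 'e list \<Rightarrow> 'k) \<Rightarrow> 'a) \<Rightarrow> 'v \<Rightarrow> ('v \<Rightarrow> 'v \<times> ('e \<times> bool) list)
    \<Rightarrow> (('v \<times> ('e \<times> bool) list) set \<Rightarrow> 'k) \<Rightarrow> ('a \<Rightarrow> 'a) set" where
  "theta Q eA sm \<nu> x0 \<gamma> f = \<Union>{hh1_class Q eA sm D | D. ftilde Q eA sm \<nu> x0 \<gamma> f D}"

end

theory Submission
  imports Defs
begin


lemma walk_chain_append:
  "walk_chain Q T x (xs @ ys) = (walk_chain Q T x xs \<and> walk_chain Q T (walk_end_aux Q x xs) ys)"
  by (induction xs arbitrary: x) auto

lemma walk_end_aux_append:
  "walk_end_aux Q x (xs @ ys) = walk_end_aux Q (walk_end_aux Q x xs) ys"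
  by (induction xs arbitrary: x) auto

lemma walk_chain_mono: "T \<subseteq> T' \<Longrightarrow> walk_chain Q T x xs \<Longrightarrow> walk_chain Q T' x xs"
  by (induction xs arbitrary: x) auto

lemma walk_end_verts:
  assumes "finite_quiver Q" "x \<in> verts Q" "walk_chain Q (arrs Q) x xs"
  shows "walk_end_aux Q x xs \<in> verts Q"
  using assms(2,3)
proof (induction xs arbitrary: x)
  case Nil then show ?case by simp
next
  case (Cons s ss)
  obtain b d where s: "s = (b, d)" by force
  have "b \<in> arrs Q" using Cons.prems s by simp
  then have "step_tgt Q s \<in> verts Q" using assms(1) s unfolding finite_quiver_def by auto
  then show ?case using Cons by simp
qed

definition flip :: "'e \<times> bool \<Rightarrow> 'e \<times> bool" where "flip = (\<lambda>(b, d). (b, \<not> d))"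

lemma winv_alt: "winv Q w = (wend Q w, rev (map flip (snd w)))"
  unfolding winv_def flip_def by simp

lemma step_flip: "step_src Q (flip s) = step_tgt Q s" "step_tgt Q (flip s) = step_src Q s"
  "fst (flip s) = fst s"
  by (cases s; simp add: flip_def)+

lemma walk_chain_rev:
  "walk_chain Q T x xs \<Longrightarrow> walk_chain Q T (walk_end_aux Q x xs) (rev (map flip xs)) \<and>
     walk_end_aux Q (walk_end_aux Q x xs) (rev (map flip xs)) = x"
proof (induction xs arbitrary: x)
  case Nil then show ?case by simp
next
  case (Cons s ss)
  then show ?case by (auto simp: walk_chain_append walk_end_aux_append step_flip)
qed

lemma is_walk_alt: "is_walk Q w \<longleftrightarrow> fst w \<in> verts Q \<and> walk_chain Q (arrs Q) (fst w) (snd w)"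
  unfolding is_walk_def is_walk_in_def by simp

lemma is_walk_wconc:
  "is_walk Q w \<Longrightarrow> is_walk Q v \<Longrightarrow> wend Q w = fst v \<Longrightarrow> is_walk Q (wconc w v)"
  unfolding is_walk_alt wconc_def wend_def by (simp add: walk_chain_append)

lemma wend_wconc: "wend Q w = fst v \<Longrightarrow> wend Q (wconc w v) = wend Q v"
  unfolding wconc_def wend_def by (simp add: walk_end_aux_append)

lemma fst_wconc[simp]: "fst (wconc w v) = fst w"
  unfolding wconc_def by simp

lemma wconc_assoc: "wconc (wconc a b) c = wconc a (wconc b c)"
  unfolding wconc_def by simp

lemma wconc_Nil[simp]: "wconc w (x, []) = w"
  unfolding wconc_def by simp

lemma is_walk_winv:
  assumes "finite_quiver Q" "is_walk Q w"
  shows "is_walk Q (winv Q w)" "wend Q (winv Q w) = fst w" "fst (winv Q w) = wend Q w"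
  using assms walk_chain_rev[of Q "arrs Q" "fst w" "snd w"] walk_end_verts[of Q "fst w" "snd w"]
  unfolding is_walk_alt winv_alt wend_def by auto

lemma wrel_conc':
  "wrel Q K w w' \<Longrightarrow> wrel Q K v v' \<Longrightarrow> wend Q w = fst v \<Longrightarrow> wend Q w' = fst v' \<Longrightarrow>
   z1 = wconc w v \<Longrightarrow> z2 = wconc w' v' \<Longrightarrow> wrel Q K z1 z2"
  using wrel_conc by blast

lemma wrel_cancel:
  assumes fq: "finite_quiver Q"
  shows "x \<in> verts Q \<Longrightarrow> walk_chain Q (arrs Q) x xs \<Longrightarrow>
    wrel Q K (walk_end_aux Q x xs, rev (map flip xs) @ xs) (walk_end_aux Q x xs, [])"
proof (induction xs arbitrary: x)
  case Nil then show ?case by (simp add: wrel_refl is_walk_alt)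
next
  case (Cons s ss)
  obtain b d where s: "s = (b, d)" by force
  have b: "b \<in> arrs Q" and sx: "step_src Q s = x" and ch: "walk_chain Q (arrs Q) (step_tgt Q s) ss"
    using Cons.prems s by auto
  define y where "y = step_tgt Q s"
  have yv: "y \<in> verts Q" using b fq s unfolding y_def finite_quiver_def by auto
  define e where "e = walk_end_aux Q y ss"
  have IH: "wrel Q K (e, rev (map flip ss) @ ss) (e, [])" using Cons.IH[OF yv] ch unfolding e_def y_def by simp
  define A where "A = (e, rev (map flip ss))"
  have rc: "walk_chain Q (arrs Q) e (rev (map flip ss)) \<and> walk_end_aux Q e (rev (map flip ss)) = y"
    using walk_chain_rev[OF ch] unfolding e_def y_def by simp
  have ev: "e \<in> verts Q" using walk_end_verts[OF fq yv] ch unfolding e_def y_def by simp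
  have wA: "is_walk Q A" using rc ev unfolding A_def is_walk_alt by simp
  have eA: "wend Q A = y" using rc unfolding A_def wend_def by simp
  have M: "wrel Q K (y, [flip s, s]) (y, [])"
  proof (cases d)
    case True
    then show ?thesis using wrel_cancel1[OF b, of K] s unfolding y_def flip_def by simp
  next
    case False
    then show ?thesis using wrel_cancel2[OF b, of K] s unfolding y_def flip_def by simp
  qed
  have eM: "wend Q (y, [flip s, s]) = y" unfolding wend_def y_def by (simp add: step_flip)
  have s1: "wrel Q K (wconc A (y, [flip s, s])) A"
    by (rule wrel_conc'[OF wrel_refl[OF wA] M]) (auto simp: eA)
  have wB: "is_walk Q (y, ss)" using yv ch unfolding is_walk_alt y_def by simp
  have s2: "wrel Q K (wconc (wconc A (y, [flip s, s])) (y, ss)) (wconc A (y, ss))"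
    by (rule wrel_conc'[OF s1 wrel_refl[OF wB]]) (auto simp: eA eM wend_wconc)
  have "wconc A (y, ss) = (e, rev (map flip ss) @ ss)" unfolding A_def wconc_def by simp
  moreover have "wconc (wconc A (y, [flip s, s])) (y, ss) = (e, rev (map flip (s # ss)) @ s # ss)"
    unfolding A_def wconc_def by simp
  moreover have "walk_end_aux Q x (s # ss) = e" unfolding e_def y_def by simp
  ultimately show ?case using s2 IH wrel_trans by metis
qed

lemma wrel_winv_w:
  assumes "finite_quiver Q" "is_walk Q w"
  shows "wrel Q K (wconc (winv Q w) w) (wend Q w, [])"
proof -
  have "wconc (winv Q w) w = (walk_end_aux Q (fst w) (snd w), rev (map flip (snd w)) @ snd w)"
    unfolding winv_alt wconc_def wend_def by simp
  then show ?thesis using wrel_cancel[OF assms(1), of "fst w" "snd w" K] assms(2)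
    unfolding is_walk_alt wend_def by simp
qed

lemma wrel_inv:
  assumes fq: "finite_quiver Q"
    and par: "\<And>f p q. minrel Q K f \<Longrightarrow> f p \<noteq> 0 \<Longrightarrow> f q \<noteq> 0 \<Longrightarrow>
        is_path Q p \<and> is_path Q q \<and> fst p = fst q \<and> pend Q p = pend Q q"
  shows "wrel Q K w v \<Longrightarrow> is_walk Q w \<and> is_walk Q v \<and> fst w = fst v \<and> wend Q w = wend Q v"
proof (induction rule: wrel.induct)
  case (wrel_cancel1 b)
  then show ?case using fq unfolding finite_quiver_def is_walk_alt wend_def by auto
next
  case (wrel_cancel2 b)
  then show ?case using fq unfolding finite_quiver_def is_walk_alt wend_def by auto
next
  case (wrel_minrel f p q)
  then show ?case using par[of f p q] unfolding is_path_def pend_def pwalk_def by auto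
next
  case (wrel_conc w w' v v')
  then show ?case by (auto simp: is_walk_wconc wend_wconc)
qed auto


lemma pwalk_simps[simp]: "fst (pwalk p) = fst p" "snd (pwalk p) = map (\<lambda>b. (b, True)) (snd p)"
  unfolding pwalk_def by auto

lemma is_path_alt: "is_path Q p \<longleftrightarrow> fst p \<in> verts Q \<and> walk_chain Q (arrs Q) (fst p) (map (\<lambda>b. (b, True)) (snd p))"
  unfolding is_path_def is_walk_alt by simp

lemma is_path_Nil[simp]: "is_path Q (x, []) \<longleftrightarrow> x \<in> verts Q"
  unfolding is_path_alt by simp

lemma pend_Nil[simp]: "pend Q (x, []) = x"
  unfolding pend_def wend_def pwalk_def by simp

lemma pend_Cons[simp]: "pend Q (x, b # bs) = pend Q (tgt Q b, bs)"
  unfolding pend_def wend_def pwalk_def by simp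

lemma is_path_Cons:
  assumes "finite_quiver Q"
  shows "is_path Q (x, b # bs) \<longleftrightarrow> b \<in> arrs Q \<and> src Q b = x \<and> is_path Q (tgt Q b, bs)"
  using assms unfolding is_path_alt finite_quiver_def by auto

lemma pend_verts: "finite_quiver Q \<Longrightarrow> is_path Q p \<Longrightarrow> pend Q p \<in> verts Q"
  unfolding pend_def wend_def is_path_alt using walk_end_verts by fastforce

lemma walk_end_aux_map_append: "walk_end_aux Q x (map (\<lambda>b. (b, True)) (xs @ ys)) =
   walk_end_aux Q (walk_end_aux Q x (map (\<lambda>b. (b, True)) xs)) (map (\<lambda>b. (b, True)) ys)"
  by (simp add: walk_end_aux_append)

lemma is_path_append:
  assumes "finite_quiver Q"
  shows "is_path Q (x, xs @ ys) \<longleftrightarrow> is_path Q (x, xs) \<and> is_path Q (pend Q (x, xs), ys)"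
  using assms pend_verts[OF assms, of "(x, xs)"]
  unfolding is_path_alt pend_def wend_def by (auto simp: walk_chain_append)

lemma pend_append: "pend Q (x, xs @ ys) = pend Q (pend Q (x, xs), ys)"
  unfolding pend_def wend_def by (simp add: walk_end_aux_append)

lemma pcomp_path:
  assumes "finite_quiver Q" "is_path Q v" "is_path Q u" "fst v = pend Q u"
  shows "is_path Q (pcomp v u)" "pend Q (pcomp v u) = pend Q v" "fst (pcomp v u) = fst u"
proof -
  obtain x xs where u: "u = (x, xs)" by force
  obtain y ys where v: "v = (y, ys)" by force
  show "is_path Q (pcomp v u)" using assms u v by (simp add: pcomp_def is_path_append)
  show "pend Q (pcomp v u) = pend Q v" using assms u v by (simp add: pcomp_def pend_append)
  show "fst (pcomp v u) = fst u" by (simp add: pcomp_def)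
qed

lemma pwalk_pcomp: "pwalk (pcomp v u) = wconc (pwalk u) (pwalk v)"
  unfolding pwalk_def pcomp_def wconc_def by simp

lemma wend_pwalk: "wend Q (pwalk p) = pend Q p"
  unfolding pend_def by simp

lemma is_walk_pwalk: "is_path Q p \<Longrightarrow> is_walk Q (pwalk p)"
  unfolding is_path_def by simp

definition Spl :: "('v, 'e) quiver \<Rightarrow> 'v \<times> 'e list \<Rightarrow> (('v \<times> 'e list) \<times> ('v \<times> 'e list)) set" where
  "Spl Q w = {(v, u). is_path Q v \<and> is_path Q u \<and> fst v = pend Q u \<and> pcomp v u = w}"

lemma kq_mult_Spl: "kq_mult Q f g w = (\<Sum>(v, u)\<in>Spl Q w. f v * g u)"
  unfolding kq_mult_def Spl_def by simp

lemma finite_Spl: "finite (Spl Q w)"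
proof -
  let ?h = "\<lambda>i. ((pend Q (fst w, take i (snd w)), drop i (snd w)), (fst w, take i (snd w)))"
  have "Spl Q w \<subseteq> ?h ` {..length (snd w)}"
  proof
    fix z assume "z \<in> Spl Q w"
    then obtain v u where z: "z = (v, u)" and c: "fst v = pend Q u" and pc: "pcomp v u = w"
      unfolding Spl_def by auto
    have "snd w = snd u @ snd v" "fst w = fst u" using pc unfolding pcomp_def by auto
    then have "z = ?h (length (snd u))" using z c by (cases u; cases v; auto)
    moreover have "length (snd u) \<le> length (snd w)" using \<open>snd w = snd u @ snd v\<close> by simp
    ultimately show "z \<in> ?h ` {..length (snd w)}" by blast
  qed
  then show ?thesis by (rule finite_subset) simp
qed

lemma kq_mult_nz:
  assumes "kq_mult Q f g w \<noteq> 0"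
  obtains v u where "is_path Q v" "is_path Q u" "fst v = pend Q u" "pcomp v u = w" "f v \<noteq> 0" "g u \<noteq> 0"
proof -
  from assms have "(\<Sum>(v, u)\<in>Spl Q w. f v * g u) \<noteq> 0" by (simp add: kq_mult_Spl)
  then obtain z where "z \<in> Spl Q w" "(case z of (v, u) \<Rightarrow> f v * g u) \<noteq> 0"
    by (rule sum.not_neutral_contains_not_neutral)
  then show ?thesis using that unfolding Spl_def by auto
qed

lemma supp_kq_mult:
  "{w. kq_mult Q f g w \<noteq> 0} \<subseteq> (\<lambda>(v, u). pcomp v u) ` ({v. f v \<noteq> 0} \<times> {u. g u \<noteq> 0})"
proof
  fix w assume "w \<in> {w. kq_mult Q f g w \<noteq> 0}"
  then obtain v u where "pcomp v u = w" "f v \<noteq> 0" "g u \<noteq> 0"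
    by (auto elim: kq_mult_nz)
  then show "w \<in> (\<lambda>(v, u). pcomp v u) ` ({v. f v \<noteq> 0} \<times> {u. g u \<noteq> 0})" by force
qed

lemma kq_mult_kQ:
  assumes fq: "finite_quiver Q" and "f \<in> kQ Q" "g \<in> kQ Q"
  shows "kq_mult Q f g \<in> kQ Q"
proof -
  have "finite {w. kq_mult Q f g w \<noteq> 0}"
  proof (rule finite_subset[OF supp_kq_mult])
    have "finite {v. f v \<noteq> 0}" "finite {v. g v \<noteq> 0}" using assms(2,3) unfolding kQ_def by auto
    then show "finite ((\<lambda>(v, u). pcomp v u) ` ({v. f v \<noteq> 0} \<times> {u. g u \<noteq> 0}))" by simp
  qed
  moreover have "is_path Q w" if "kq_mult Q f g w \<noteq> 0" for w
    using that by (auto elim!: kq_mult_nz intro: pcomp_path[OF fq])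
  ultimately show ?thesis unfolding kQ_def by auto
qed

lemma bp_kQ: "is_path Q p \<Longrightarrow> bp p \<in> kQ Q"
  unfolding kQ_def bp_def by auto

lemma bp_apply: "bp p w = (if w = p then 1 else 0)"
  unfolding bp_def by simp

lemma kq_add_kQ: "f \<in> kQ Q \<Longrightarrow> g \<in> kQ Q \<Longrightarrow> kq_add f g \<in> kQ Q"
proof -
  assume a: "f \<in> kQ Q" "g \<in> kQ Q"
  have "{w. kq_add f g w \<noteq> 0} \<subseteq> {w. f w \<noteq> 0} \<union> {w. g w \<noteq> 0}" unfolding kq_add_def by auto
  then show ?thesis using a unfolding kQ_def kq_add_def by (auto intro: finite_subset)
qed

lemma kq_smult_kQ: "f \<in> kQ Q \<Longrightarrow> kq_smult c f \<in> kQ Q"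
proof -
  assume a: "f \<in> kQ Q"
  have "{w. kq_smult c f w \<noteq> 0} \<subseteq> {w. f w \<noteq> 0}" unfolding kq_smult_def by auto
  then show ?thesis using a unfolding kQ_def kq_smult_def by (auto intro: finite_subset)
qed

lemma sum_single:
  assumes "finite A" "a \<in> A" "\<forall>x\<in>A - {a}. g x = 0"
  shows "sum g A = g a"
  using assms by (simp add: sum.remove)

lemma kq_mult_bp_bp:
  assumes fq: "finite_quiver Q" and "is_path Q v" "is_path Q u" "fst v = pend Q u"
  shows "kq_mult Q (bp v) (bp u) = bp (pcomp v u)"
proof
  fix w
  have "kq_mult Q (bp v) (bp u) w = (\<Sum>z\<in>Spl Q w. if z = (v, u) then 1 else 0)"
    unfolding kq_mult_Spl by (rule sum.cong) (auto simp: bp_apply split: if_splits)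
  also have "\<dots> = (if (v, u) \<in> Spl Q w then 1 else 0)"
    by (rule sum.delta[OF finite_Spl])
  also have "\<dots> = bp (pcomp v u) w" using assms unfolding Spl_def bp_apply by auto
  finally show "kq_mult Q (bp v) (bp u) w = bp (pcomp v u) w" .
qed

lemma kq_mult_right_unit:
  assumes fq: "finite_quiver Q" and f: "f \<in> kQ Q" and x: "x \<in> verts Q"
  shows "kq_mult Q f (bp (x, [])) = (\<lambda>w. if fst w = x then f w else 0)"
proof
  fix w
  have "kq_mult Q f (bp (x, [])) w = (\<Sum>z\<in>Spl Q w. if z = (w, (x, [])) then f w else 0)"
    unfolding kq_mult_Spl by (rule sum.cong) (auto simp: bp_apply Spl_def pcomp_def split: if_splits)
  also have "\<dots> = (if (w, (x, [])) \<in> Spl Q w then f w else 0)"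
    by (rule sum.delta[OF finite_Spl])
  also have "\<dots> = (if fst w = x then f w else 0)"
    using f x unfolding Spl_def pcomp_def kQ_def by (cases w) auto
  finally show "kq_mult Q f (bp (x, [])) w = (if fst w = x then f w else 0)" .
qed

lemma kq_mult_left_unit:
  assumes fq: "finite_quiver Q" and f: "f \<in> kQ Q" and y: "y \<in> verts Q"
  shows "kq_mult Q (bp (y, [])) f = (\<lambda>w. if pend Q w = y then f w else 0)"
proof
  fix w
  have "kq_mult Q (bp (y, [])) f w = (\<Sum>z\<in>Spl Q w. if z = ((y, []), w) then f w else 0)"
    unfolding kq_mult_Spl by (rule sum.cong) (auto simp: bp_apply Spl_def pcomp_def split: if_splits)
  also have "\<dots> = (if ((y, []), w) \<in> Spl Q w then f w else 0)"
    by (rule sum.delta[OF finite_Spl])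
  also have "\<dots> = (if pend Q w = y then f w else 0)"
    using f y unfolding Spl_def pcomp_def kQ_def by (cases w) auto
  finally show "kq_mult Q (bp (y, [])) f w = (if pend Q w = y then f w else 0)" .
qed


definition lc :: "'p set \<Rightarrow> ('p \<Rightarrow> 'k::field) \<Rightarrow> ('p \<Rightarrow> 'q \<Rightarrow> 'k) \<Rightarrow> 'q \<Rightarrow> 'k" where
  "lc A c g = (\<lambda>w. \<Sum>q\<in>A. c q * g q w)"

definition Rs :: "'p set \<Rightarrow> ('p \<Rightarrow> 'k::field) \<Rightarrow> 'p \<Rightarrow> 'k" where
  "Rs C f = (\<lambda>w. if w \<in> C then f w else 0)"

definition cnt :: "'e \<Rightarrow> 'v \<times> 'e list \<Rightarrow> nat" where
  "cnt a p = length (filter (\<lambda>b. b = a) (snd p))"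

declare split_paired_All [simp del] split_paired_Ex [simp del]

lemma arrow_path_props:
  assumes "finite_quiver Q" "b \<in> arrs Q"
  shows "is_path Q (arrow_path Q b)" "fst (arrow_path Q b) = src Q b" "pend Q (arrow_path Q b) = tgt Q b"
    "snd (arrow_path Q b) = [b]"
  using assms unfolding arrow_path_def finite_quiver_def by (auto simp: is_path_Cons[OF assms(1)])

lemma kQ_finite: "f \<in> kQ Q \<Longrightarrow> finite {p. f p \<noteq> 0}"
  unfolding kQ_def by auto

lemma kQ_path: "f \<in> kQ Q \<Longrightarrow> f p \<noteq> 0 \<Longrightarrow> is_path Q p"
  unfolding kQ_def mem_Collect_eq by blast

lemma kQ_decomp: assumes "finite {p. f p \<noteq> 0}" shows "f = lc {p. f p \<noteq> 0} f bp"
proof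
  fix w
  have "lc {p. f p \<noteq> 0} f bp w = (\<Sum>q\<in>{p. f p \<noteq> 0}. if q = w then f w else 0)"
    unfolding lc_def by (rule sum.cong) (auto simp: bp_apply)
  also have "\<dots> = f w"
    using assms by (auto simp: sum.delta')
  finally show "f w = lc {p. f p \<noteq> 0} f bp w" 
  proof -
    assume h: "lc {p. f p \<noteq> 0} f bp w = f w"
    show ?thesis using h by simp
  qed
qed

lemma Rs_kQ: "f \<in> kQ Q \<Longrightarrow> Rs C f \<in> kQ Q"
proof -
  assume a: "f \<in> kQ Q"
  have "{w. Rs C f w \<noteq> 0} \<subseteq> {w. f w \<noteq> 0}" unfolding Rs_def by auto
  then show ?thesis using a unfolding kQ_def Rs_def by (auto intro: finite_subset)
qed

locale tsetting =
  fixes Q :: "('v, 'e) quiver" and \<alpha> :: 'e and u :: "'v \<times> 'e list" and \<tau> :: "'k::field"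
  assumes fq: "finite_quiver Q" and byp: "bypass Q \<alpha> u" and nc: "no_oriented_cycles Q"
begin

abbreviation "phi \<equiv> phi_list Q \<alpha> u \<tau>"
abbreviation "phA \<equiv> phi_arrow Q \<alpha> u \<tau>"
abbreviation "T \<equiv> transv Q \<alpha> u \<tau>"

lemma alpha_arr: "\<alpha> \<in> arrs Q" and u_path: "is_path Q u" and u_fst: "fst u = src Q \<alpha>"
  and u_pend: "pend Q u = tgt Q \<alpha>" and u_ne: "u \<noteq> arrow_path Q \<alpha>"
  using byp unfolding bypass_def by auto

lemma alpha_notin_u: "\<alpha> \<notin> set (snd u)"
proof
  assume "\<alpha> \<in> set (snd u)"
  then obtain xs ys where sp: "snd u = xs @ \<alpha> # ys" by (meson split_list)
  obtain x where ux: "u = (x, xs @ \<alpha> # ys)" using sp by (cases u) auto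
  have p1: "is_path Q (x, xs)" and p2: "is_path Q (pend Q (x, xs), \<alpha> # ys)"
    using u_path ux is_path_append[OF fq] by auto
  have e1: "pend Q (x, xs) = src Q \<alpha>" using p2 is_path_Cons[OF fq] by auto
  have x: "x = src Q \<alpha>" using u_fst ux by simp
  have xs: "xs = []"
  proof (rule ccontr)
    assume "xs \<noteq> []"
    then show False using nc p1 e1 x unfolding no_oriented_cycles_def by force
  qed
  have p3: "is_path Q (tgt Q \<alpha>, ys)" using p2 is_path_Cons[OF fq] by auto
  have e3: "pend Q (tgt Q \<alpha>, ys) = tgt Q \<alpha>" using u_pend ux xs x by simp
  have ys: "ys = []"
  proof (rule ccontr)
    assume "ys \<noteq> []"
    then show False using nc p3 e3 unfolding no_oriented_cycles_def by force
  qed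
  show False using u_ne ux xs ys x unfolding arrow_path_def by simp
qed

lemma phA_kQ: "b \<in> arrs Q \<Longrightarrow> phA b \<in> kQ Q"
proof -
  assume b: "b \<in> arrs Q"
  have "bp (arrow_path Q b) \<in> kQ Q" by (rule bp_kQ) (rule arrow_path_props[OF fq b])
  moreover have "bp u \<in> kQ Q" by (rule bp_kQ) (rule u_path)
  ultimately show ?thesis unfolding phi_arrow_def by (auto intro: kq_add_kQ kq_smult_kQ)
qed

lemma phA_supp: "phA b w \<noteq> 0 \<Longrightarrow> w = arrow_path Q b \<or> (b = \<alpha> \<and> w = u)"
  unfolding phi_arrow_def kq_add_def kq_smult_def bp_def by (auto split: if_splits)

lemma phA_diag: "phA b (arrow_path Q b) = 1"
  using u_ne unfolding phi_arrow_def kq_add_def kq_smult_def bp_def by auto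

lemma phi_kQ_supp:
  "is_path Q (x, bs) \<Longrightarrow> phi x bs \<in> kQ Q \<and>
     (\<forall>w. phi x bs w \<noteq> 0 \<longrightarrow> is_path Q w \<and> fst w = x \<and> pend Q w = pend Q (x, bs))"
proof (induction bs arbitrary: x)
  case Nil
  have "bp (x, []) \<in> kQ Q" by (rule bp_kQ) (use Nil.prems in simp)
  moreover have "\<forall>w. bp (x, []) w \<noteq> 0 \<longrightarrow> is_path Q w \<and> fst w = x \<and> pend Q w = pend Q (x, [])"
    using Nil.prems by (simp add: bp_apply)
  ultimately show ?case by (simp only: phi_list.simps)
next
  case (Cons b bs)
  have b: "b \<in> arrs Q" "src Q b = x" and r: "is_path Q (tgt Q b, bs)"
    using Cons.prems is_path_Cons[OF fq] by auto
  note IH = Cons.IH[OF r]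
  have A: "kq_mult Q (phi (tgt Q b) bs) (phA b) \<in> kQ Q"
    using kq_mult_kQ[OF fq] IH phA_kQ[OF b(1)] by blast
  have B: "is_path Q w \<and> fst w = x \<and> pend Q w = pend Q (x, b # bs)"
    if nz: "kq_mult Q (phi (tgt Q b) bs) (phA b) w \<noteq> 0" for w
  proof -
    obtain v u' where v: "is_path Q v" "is_path Q u'" "fst v = pend Q u'" "pcomp v u' = w"
      "phi (tgt Q b) bs v \<noteq> 0" "phA b u' \<noteq> 0"
      using nz by (rule kq_mult_nz)
    have u': "fst u' = x" "pend Q u' = tgt Q b"
      using phA_supp[OF v(6)] arrow_path_props[OF fq b(1)] b u_fst u_pend by auto
    have "pend Q v = pend Q (tgt Q b, bs)" using IH v(5) by blast
    then show ?thesis using pcomp_path[OF fq v(1,2,3)] v(4) u' by simp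
  qed
  have C: "\<forall>w. kq_mult Q (phi (tgt Q b) bs) (phA b) w \<noteq> 0 \<longrightarrow>
      is_path Q w \<and> fst w = x \<and> pend Q w = pend Q (x, b # bs)"
    using B by blast
  have E: "phi x (b # bs) = kq_mult Q (phi (tgt Q b) bs) (phA b)" by (rule phi_list.simps)
  show ?case unfolding E using A C by (rule conjI)
qed

lemma phi_kQ: "is_path Q p \<Longrightarrow> phi (fst p) (snd p) \<in> kQ Q"
proof -
  assume "is_path Q p"
  then have "is_path Q (fst p, snd p)" by simp
  from phi_kQ_supp[OF this] show ?thesis by blast
qed

lemma phi_supp: "is_path Q p \<Longrightarrow> phi (fst p) (snd p) w \<noteq> 0 \<Longrightarrow>
   is_path Q w \<and> fst w = fst p \<and> pend Q w = pend Q p"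
proof -
  assume a: "is_path Q p" "phi (fst p) (snd p) w \<noteq> 0"
  then have "is_path Q (fst p, snd p)" by simp
  from phi_kQ_supp[OF this] have "\<forall>w. phi (fst p) (snd p) w \<noteq> 0 \<longrightarrow>
    is_path Q w \<and> fst w = fst p \<and> pend Q w = pend Q (fst p, snd p)" by (elim conjE)
  from this[rule_format, OF a(2)] have "is_path Q w \<and> fst w = fst p \<and> pend Q w = pend Q (fst p, snd p)" .
  then show ?thesis by (simp only: prod.collapse)
qed

lemma transv_bp: "is_path Q p \<Longrightarrow> T (bp p) = phi (fst p) (snd p)"
proof
  fix w
  have "{q. bp p q \<noteq> (0::'k)} = {p}" by (auto simp: bp_apply)
  then show "T (bp p) w = phi (fst p) (snd p) w" unfolding transv_def by (simp add: bp_apply)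
qed

lemma phi_nocc: "is_path Q (x, bs) \<Longrightarrow> \<alpha> \<notin> set bs \<Longrightarrow> phi x bs = bp (x, bs)"
proof (induction bs arbitrary: x)
  case Nil then show ?case by simp
next
  case (Cons b bs)
  have b: "b \<in> arrs Q" "src Q b = x" and r: "is_path Q (tgt Q b, bs)"
    using Cons.prems is_path_Cons[OF fq] by auto
  have "b \<noteq> \<alpha>" using Cons.prems by auto
  then have "phi x (b # bs) = kq_mult Q (bp (tgt Q b, bs)) (bp (arrow_path Q b))"
    using Cons r by (simp add: phi_arrow_def)
  also have "\<dots> = bp (pcomp (tgt Q b, bs) (arrow_path Q b))"
    by (rule kq_mult_bp_bp[OF fq r arrow_path_props(1)[OF fq b(1)]]) (simp add: arrow_path_props[OF fq b(1)])
  also have "\<dots> = bp (x, b # bs)" using b unfolding pcomp_def arrow_path_def by simp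
  finally show ?case .
qed

lemma phi_single: "b \<in> arrs Q \<Longrightarrow> phi (src Q b) [b] = phA b"
proof -
  assume b: "b \<in> arrs Q"
  have tv: "tgt Q b \<in> verts Q" using fq b unfolding finite_quiver_def by auto
  have "phi (src Q b) [b] = kq_mult Q (bp (tgt Q b, [])) (phA b)" by simp
  also have "\<dots> = (\<lambda>w. if pend Q w = tgt Q b then phA b w else 0)"
    by (rule kq_mult_left_unit[OF fq phA_kQ[OF b] tv])
  also have "\<dots> = phA b"
  proof
    fix w show "(if pend Q w = tgt Q b then phA b w else 0) = phA b w"
      using phA_supp[of b w] arrow_path_props[OF fq b] u_pend by auto
  qed
  finally show ?thesis .
qed

lemma transv_superset:
  assumes "finite B" "{p. f p \<noteq> 0} \<subseteq> B"
  shows "T f w = (\<Sum>p\<in>B. f p * phi (fst p) (snd p) w)"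
  unfolding transv_def by (rule sum.mono_neutral_left) (use assms in auto)

lemma transv_add:
  assumes "f \<in> kQ Q" "g \<in> kQ Q"
  shows "T (kq_add f g) = kq_add (T f) (T g)"
proof
  fix w
  let ?B = "{p. f p \<noteq> 0} \<union> {p. g p \<noteq> 0}"
  have fin: "finite ?B" using assms kQ_finite by auto
  have "T (kq_add f g) w = (\<Sum>p\<in>?B. kq_add f g p * phi (fst p) (snd p) w)"
    by (rule transv_superset[OF fin]) (auto simp: kq_add_def)
  also have "\<dots> = (\<Sum>p\<in>?B. f p * phi (fst p) (snd p) w) + (\<Sum>p\<in>?B. g p * phi (fst p) (snd p) w)"
    by (simp add: kq_add_def distrib_right sum.distrib)
  also have "\<dots> = T f w + T g w"
    using transv_superset[OF fin, of f w] transv_superset[OF fin, of g w] by auto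
  finally show "T (kq_add f g) w = kq_add (T f) (T g) w" by (simp add: kq_add_def)
qed

lemma transv_smult:
  assumes "f \<in> kQ Q"
  shows "T (kq_smult c f) = kq_smult c (T f)"
proof
  fix w
  let ?B = "{p. f p \<noteq> 0}"
  have fin: "finite ?B" using assms kQ_finite by auto
  have "T (kq_smult c f) w = (\<Sum>p\<in>?B. kq_smult c f p * phi (fst p) (snd p) w)"
    by (rule transv_superset[OF fin]) (auto simp: kq_smult_def)
  also have "\<dots> = c * (\<Sum>p\<in>?B. f p * phi (fst p) (snd p) w)"
    by (simp add: kq_smult_def sum_distrib_left mult.assoc)
  also have "\<dots> = c * T f w"
    using transv_superset[OF fin, of f w] by auto
  finally show "T (kq_smult c f) w = kq_smult c (T f) w" by (simp add: kq_smult_def)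
qed

lemma transv_kQ:
  assumes f: "f \<in> kQ Q"
  shows "T f \<in> kQ Q"
proof -
  let ?B = "{p. f p \<noteq> 0}"
  have fin: "finite ?B" using assms kQ_finite by auto
  have sub: "{w. T f w \<noteq> 0} \<subseteq> (\<Union>p\<in>?B. {w. phi (fst p) (snd p) w \<noteq> 0})"
  proof
    fix w assume "w \<in> {w. T f w \<noteq> 0}"
    then have "(\<Sum>p\<in>?B. f p * phi (fst p) (snd p) w) \<noteq> 0" unfolding transv_def by simp
    then obtain p where "p \<in> ?B" "f p * phi (fst p) (snd p) w \<noteq> 0"
      by (rule sum.not_neutral_contains_not_neutral)
    then have "p \<in> ?B" "phi (fst p) (snd p) w \<noteq> 0" by auto
    then show "w \<in> (\<Union>p\<in>?B. {w. phi (fst p) (snd p) w \<noteq> 0})" by (intro UN_I) simp_all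
  qed
  have "finite (\<Union>p\<in>?B. {w. phi (fst p) (snd p) w \<noteq> 0})"
  proof (rule finite_UN_I[OF fin])
    fix p assume "p \<in> ?B"
    then have "is_path Q p" using kQ_path[OF f] by simp
    then show "finite {w. phi (fst p) (snd p) w \<noteq> 0}" by (rule kQ_finite[OF phi_kQ])
  qed
  then have "finite {w. T f w \<noteq> 0}" using sub finite_subset by blast
  moreover have "is_path Q w" if nz: "T f w \<noteq> 0" for w
  proof -
    have "w \<in> (\<Union>p\<in>?B. {w. phi (fst p) (snd p) w \<noteq> 0})" using sub nz by blast
    then obtain p where "p \<in> ?B" "phi (fst p) (snd p) w \<noteq> 0" by blast
    then show ?thesis using phi_supp[of p w] kQ_path[OF f, of p] by simp
  qed
  ultimately show ?thesis unfolding kQ_def by auto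
qed

lemma lc_insert: "a \<notin> A \<Longrightarrow> finite A \<Longrightarrow> lc (insert a A) c g = kq_add (kq_smult (c a) (g a)) (lc A c g)"
  unfolding lc_def kq_add_def kq_smult_def by auto

lemma transv_lc:
  assumes "finite A" "\<forall>q\<in>A. g q \<in> kQ Q"
  shows "lc A c g \<in> kQ Q \<and> T (lc A c g) = lc A c (\<lambda>q. T (g q))"
  using assms
proof (induction A rule: finite_induct)
  case empty
  have "lc {} c g = (\<lambda>w. 0)" unfolding lc_def by simp
  moreover have "T (\<lambda>w. 0) = (\<lambda>w. 0)" unfolding transv_def by simp
  moreover have "(\<lambda>w. 0) \<in> kQ Q" unfolding kQ_def by simp
  ultimately show ?case unfolding lc_def by simp
next
  case (insert a A)
  have ga: "g a \<in> kQ Q" using insert by simp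
  have IH: "lc A c g \<in> kQ Q" "T (lc A c g) = lc A c (\<lambda>q. T (g q))" using insert by auto
  show ?case
    using insert(1,2) IH ga
    by (simp add: lc_insert kq_add_kQ kq_smult_kQ transv_add transv_smult)
qed

lemma transv_Rs:
  assumes f: "f \<in> kQ Q"
    and C: "\<And>p q. is_path Q p \<Longrightarrow> phi (fst p) (snd p) q \<noteq> 0 \<Longrightarrow> (p \<in> C \<longleftrightarrow> q \<in> C)"
  shows "T (Rs C f) = Rs C (T f)"
proof
  fix w
  let ?B = "{p. f p \<noteq> 0}"
  have fin: "finite ?B" using assms kQ_finite by auto
  have "T (Rs C f) w = (\<Sum>p\<in>?B. Rs C f p * phi (fst p) (snd p) w)"
    by (rule transv_superset[OF fin]) (auto simp: Rs_def)
  also have "\<dots> = (\<Sum>p\<in>?B. if w \<in> C then f p * phi (fst p) (snd p) w else 0)"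
  proof (rule sum.cong)
    fix p assume p: "p \<in> ?B"
    have pp: "is_path Q p" using p kQ_path[OF f] by auto
    show "Rs C f p * phi (fst p) (snd p) w = (if w \<in> C then f p * phi (fst p) (snd p) w else 0)"
      using C[OF pp, of w] unfolding Rs_def by (cases "phi (fst p) (snd p) w = 0") auto
  qed simp
  also have "\<dots> = Rs C (T f) w"
    using transv_superset[OF fin, of f w] unfolding Rs_def by auto
  finally show "T (Rs C f) w = Rs C (T f) w" .
qed

end


lemma cnt_pcomp: "cnt a (pcomp v w) = cnt a w + cnt a v"
  unfolding cnt_def pcomp_def by simp

lemma cnt_Cons: "cnt a (x, b # bs) = (if b = a then 1 else 0) + cnt a (y, bs)"
  unfolding cnt_def by simp

lemma minrel_closed:
  assumes "minrel Q K f" "Rs C f \<in> K" "f p \<noteq> 0" "p \<in> C" "f q \<noteq> 0"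
  shows "q \<in> C"
proof (rule ccontr)
  assume q: "q \<notin> C"
  let ?S = "{w. f w \<noteq> 0} \<inter> C"
  have "?S \<subseteq> {w. f w \<noteq> 0}" "?S \<noteq> {}" "?S \<noteq> {w. f w \<noteq> 0}" using assms q by auto
  then have "(\<lambda>w. if w \<in> ?S then f w else 0) \<notin> K" using assms(1) unfolding minrel_def by blast
  moreover have "(\<lambda>w. if w \<in> ?S then f w else 0) = Rs C f" unfolding Rs_def by auto
  ultimately show False using assms(2) by simp
qed

lemma zero_kQ: "(\<lambda>w. 0) \<in> kQ Q"
  unfolding kQ_def by simp

lemma kernel_Rs:
  fixes M :: "('v \<times> 'e list \<Rightarrow> 'k::field) \<Rightarrow> 'a::ab_group_add"
  assumes add: "\<And>f g. f \<in> kQ Q \<Longrightarrow> g \<in> kQ Q \<Longrightarrow> M (kq_add f g) = M f + M g"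
    and Cp: "\<And>g s t. minrel Q (kerP Q M) g \<Longrightarrow> g s \<noteq> 0 \<Longrightarrow> g t \<noteq> 0 \<Longrightarrow> (s \<in> C \<longleftrightarrow> t \<in> C)"
  shows "g \<in> kerP Q M \<Longrightarrow> Rs C g \<in> kerP Q M"
proof (induction "card {w. g w \<noteq> 0}" arbitrary: g rule: less_induct)
  case less
  let ?K = "kerP Q M"
  have gk: "g \<in> kQ Q" "M g = 0" using less.prems unfolding kerP_def by auto
  have fin: "finite {w. g w \<noteq> 0}" using gk kQ_finite by blast
  have z: "M (\<lambda>w. 0) = 0"
  proof -
    have "kq_add (\<lambda>w::'v \<times> 'e list. 0::'k) (\<lambda>w. 0) = (\<lambda>w. 0)" unfolding kq_add_def by simp
    then have "M (\<lambda>w. 0) = M (\<lambda>w. 0) + M (\<lambda>w. 0)" using add[OF zero_kQ zero_kQ] by metis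
    then show ?thesis by simp
  qed
  show ?case
  proof (cases "{w. g w \<noteq> 0} = {}")
    case True
    then have "Rs C g = (\<lambda>w. 0)" unfolding Rs_def by auto
    then show ?thesis using z zero_kQ unfolding kerP_def by simp
  next
    case False
    define P where "P S \<longleftrightarrow> S \<subseteq> {w. g w \<noteq> 0} \<and> S \<noteq> {} \<and> Rs S g \<in> ?K" for S
    have "Rs {w. g w \<noteq> 0} g = g" unfolding Rs_def by auto
    then have "P {w. g w \<noteq> 0}" using False less.prems unfolding P_def by simp
    then obtain S where PS: "P S" and Smin: "\<And>S'. P S' \<Longrightarrow> card S \<le> card S'"
      using ex_has_least_nat[of P "{w. g w \<noteq> 0}" card] by blast
    have S: "S \<subseteq> {w. g w \<noteq> 0}" "S \<noteq> {}" "Rs S g \<in> ?K" using PS unfolding P_def by auto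
    have finS: "finite S" using S(1) fin finite_subset by blast
    have suppS: "{w. Rs S g w \<noteq> 0} = S" using S(1) unfolding Rs_def by auto
    have mr: "minrel Q ?K (Rs S g)"
      unfolding minrel_def
    proof (intro conjI allI impI)
      show "Rs S g \<in> ?K" by (rule S(3))
      show "Rs S g \<noteq> (\<lambda>_. 0)"
      proof
        assume "Rs S g = (\<lambda>_. 0)"
        then have "{w. Rs S g w \<noteq> 0} = {}" by simp
        then show False using suppS S(2) by simp
      qed
      fix S' assume S': "S' \<subseteq> {p. Rs S g p \<noteq> 0} \<and> S' \<noteq> {} \<and> S' \<noteq> {p. Rs S g p \<noteq> 0}"
      show "(\<lambda>w. if w \<in> S' then Rs S g w else 0) \<notin> ?K"
      proof
        assume k: "(\<lambda>w. if w \<in> S' then Rs S g w else 0) \<in> ?K"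
        have "S' \<subseteq> S" using S' suppS by simp
        then have "(\<lambda>w. if w \<in> S' then Rs S g w else 0) = Rs S' g" unfolding Rs_def by (intro ext) auto
        then have "P S'" using k S' suppS S(1) unfolding P_def by auto
        then have "card S \<le> card S'" by (rule Smin)
        moreover have "card S' < card S" using S' suppS finS by (simp add: psubset_card_mono psubsetI)
        ultimately show False by simp
      qed
    qed
    have allS: "s \<in> C \<longleftrightarrow> t \<in> C" if "s \<in> S" "t \<in> S" for s t
      using Cp[OF mr, of s t] that suppS by auto
    define g' where "g' = Rs (- S) g"
    have g'k: "g' \<in> kQ Q" unfolding g'_def by (rule Rs_kQ[OF gk(1)])
    have RSk: "Rs S g \<in> kQ Q" by (rule Rs_kQ[OF gk(1)])
    have gsplit: "g = kq_add (Rs S g) g'" unfolding g'_def Rs_def kq_add_def by auto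
    have "M g = M (Rs S g) + M g'" using add[OF RSk g'k] gsplit by simp
    moreover have "M (Rs S g) = 0" using S(3) unfolding kerP_def by simp
    ultimately have Mg': "M g' = 0" using gk(2) by simp
    have supp': "{w. g' w \<noteq> 0} = {w. g w \<noteq> 0} - S" unfolding g'_def Rs_def by auto
    have "card {w. g' w \<noteq> 0} < card {w. g w \<noteq> 0}"
    proof -
      have "{w. g w \<noteq> 0} - S \<subset> {w. g w \<noteq> 0}" using S(1,2) by blast
      then show ?thesis unfolding supp' by (rule psubset_card_mono[OF fin])
    qed
    then have IH: "Rs C g' \<in> ?K" using less.hyps[of g'] g'k Mg' unfolding kerP_def by simp
    have RC: "Rs C (Rs S g) \<in> ?K"
    proof (cases "S \<subseteq> C")
      case True
      then have "Rs C (Rs S g) = Rs S g" unfolding Rs_def by (intro ext) auto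
      then show ?thesis using S(3) by simp
    next
      case False
      then obtain s where s: "s \<in> S" "s \<notin> C" by blast
      then have "S \<inter> C = {}" using allS by blast
      then have "Rs C (Rs S g) = (\<lambda>w. 0)" unfolding Rs_def by (intro ext) auto
      then show ?thesis using z zero_kQ unfolding kerP_def by simp
    qed
    have "Rs C g = kq_add (Rs C (Rs S g)) (Rs C g')" unfolding g'_def Rs_def kq_add_def by (intro ext) auto
    moreover have "Rs C (Rs S g) \<in> kQ Q" "Rs C g' \<in> kQ Q" by (auto intro: Rs_kQ RSk g'k)
    ultimately have "M (Rs C g) = 0" using add RC IH unfolding kerP_def by simp
    then show ?thesis using Rs_kQ[OF gk(1)] unfolding kerP_def by simp
  qed
qed

context tsetting
begin

lemma cnt_u: "cnt \<alpha> u = 0"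
  using alpha_notin_u unfolding cnt_def by (auto simp: filter_empty_conv)

lemma cnt_arrow: "cnt \<alpha> (arrow_path Q b) = (if b = \<alpha> then 1 else 0)"
  unfolding cnt_def arrow_path_def by auto

lemma phi_tri:
  "is_path Q (x, bs) \<Longrightarrow> phi x bs (x, bs) = 1 \<and>
     (\<forall>w. phi x bs w \<noteq> 0 \<longrightarrow> w = (x, bs) \<or> cnt \<alpha> w < cnt \<alpha> (x, bs))"
proof (induction bs arbitrary: x)
  case Nil then show ?case by (simp add: bp_apply)
next
  case (Cons b bs)
  have b: "b \<in> arrs Q" "src Q b = x" and rp: "is_path Q (tgt Q b, bs)"
    using Cons.prems is_path_Cons[OF fq] by auto
  define r where "r = (tgt Q b, bs)"
  define p where "p = (x, b # bs)"
  have IH1: "phi (tgt Q b) bs r = 1" and IH2: "\<And>v. phi (tgt Q b) bs v \<noteq> 0 \<Longrightarrow> v = r \<or> cnt \<alpha> v < cnt \<alpha> r"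
    using Cons.IH[OF rp] unfolding r_def by auto
  have cp: "cnt \<alpha> p = (if b = \<alpha> then 1 else 0) + cnt \<alpha> r"
    unfolding p_def r_def by (rule cnt_Cons)
  have pc: "pcomp r (arrow_path Q b) = p" unfolding r_def p_def pcomp_def arrow_path_def using b by simp
  have K: "(v = r \<and> u' = arrow_path Q b) \<or> cnt \<alpha> w < cnt \<alpha> p"
    if "pcomp v u' = w" "phi (tgt Q b) bs v \<noteq> 0" "phA b u' \<noteq> 0" for v u' w
  proof -
    have cw: "cnt \<alpha> w = cnt \<alpha> u' + cnt \<alpha> v" using that(1) cnt_pcomp by metis
    from phA_supp[OF that(3)] show ?thesis
    proof
      assume u': "u' = arrow_path Q b"
      from IH2[OF that(2)] show ?thesis
      proof
        assume "cnt \<alpha> v < cnt \<alpha> r"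
        then show ?thesis using cw cp u' cnt_arrow by simp
      qed (simp add: u')
    next
      assume "b = \<alpha> \<and> u' = u"
      then show ?thesis using cw cp cnt_u IH2[OF that(2)] by auto
    qed
  qed
  have E: "phi x (b # bs) = kq_mult Q (phi (tgt Q b) bs) (phA b)" by (rule phi_list.simps)
  have part2: "w = p \<or> cnt \<alpha> w < cnt \<alpha> p" if nz: "kq_mult Q (phi (tgt Q b) bs) (phA b) w \<noteq> 0" for w
  proof -
    obtain v u' where v: "is_path Q v" "is_path Q u'" "fst v = pend Q u'" "pcomp v u' = w"
      "phi (tgt Q b) bs v \<noteq> 0" "phA b u' \<noteq> 0"
      using nz by (rule kq_mult_nz)
    show ?thesis using K[OF v(4,5,6)] pc v(4) by auto
  qed
  have part1: "kq_mult Q (phi (tgt Q b) bs) (phA b) p = 1"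
  proof -
    have "kq_mult Q (phi (tgt Q b) bs) (phA b) p = (\<Sum>(v, u')\<in>Spl Q p. phi (tgt Q b) bs v * phA b u')"
      by (rule kq_mult_Spl)
    also have "\<dots> = (case (r, arrow_path Q b) of (v, u') \<Rightarrow> phi (tgt Q b) bs v * phA b u')"
    proof (rule sum_single[OF finite_Spl])
      show "(r, arrow_path Q b) \<in> Spl Q p"
        unfolding Spl_def using rp arrow_path_props[OF fq b(1)] pc r_def by simp
      show "\<forall>z\<in>Spl Q p - {(r, arrow_path Q b)}. (case z of (v, u') \<Rightarrow> phi (tgt Q b) bs v * phA b u') = 0"
      proof
        fix z assume z: "z \<in> Spl Q p - {(r, arrow_path Q b)}"
        obtain v u' where zv: "z = (v, u')" by (cases z) auto
        have pcz: "pcomp v u' = p" using z zv unfolding Spl_def by auto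
        show "(case z of (v, u') \<Rightarrow> phi (tgt Q b) bs v * phA b u') = 0"
        proof (rule ccontr)
          assume "(case z of (v, u') \<Rightarrow> phi (tgt Q b) bs v * phA b u') \<noteq> 0"
          then have nz: "phi (tgt Q b) bs v \<noteq> 0" "phA b u' \<noteq> 0" using zv by auto
          show False using K[OF pcz nz] z zv by auto
        qed
      qed
    qed
    also have "\<dots> = 1" using IH1 phA_diag by simp
    finally show ?thesis .
  qed
  show ?case unfolding E using part1 part2 unfolding p_def by blast
qed

lemma transv_surj_bp: "is_path Q p \<Longrightarrow> \<exists>g\<in>kQ Q. T g = bp p"
proof (induction "cnt \<alpha> p" arbitrary: p rule: less_induct)
  case less
  have pp: "is_path Q (fst p, snd p)" using less.prems by simp
  have tri1: "phi (fst p) (snd p) p = 1" and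
       tri2: "\<And>w. phi (fst p) (snd p) w \<noteq> 0 \<Longrightarrow> w = p \<or> cnt \<alpha> w < cnt \<alpha> p"
    using phi_tri[OF pp] by auto
  have phk: "phi (fst p) (snd p) \<in> kQ Q" by (rule phi_kQ[OF less.prems])
  define R where "R = kq_add (phi (fst p) (snd p)) (kq_smult (-1) (bp p))"
  have Rk: "R \<in> kQ Q" unfolding R_def by (intro kq_add_kQ kq_smult_kQ phk bp_kQ less.prems)
  have Rs: "R w \<noteq> 0 \<Longrightarrow> is_path Q w \<and> cnt \<alpha> w < cnt \<alpha> p" for w
  proof -
    assume nz: "R w \<noteq> 0"
    have "w \<noteq> p" using nz tri1 unfolding R_def kq_add_def kq_smult_def bp_apply by auto
    moreover have "phi (fst p) (snd p) w \<noteq> 0" using nz \<open>w \<noteq> p\<close> unfolding R_def kq_add_def kq_smult_def bp_apply by auto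
    ultimately show ?thesis using tri2 kQ_path[OF Rk nz] by blast
  qed
  define G where "G = (\<lambda>q. SOME g. g \<in> kQ Q \<and> T g = bp q)"
  have G: "G q \<in> kQ Q \<and> T (G q) = bp q" if "R q \<noteq> 0" for q
  proof -
    have "\<exists>g\<in>kQ Q. T g = bp q" using less.hyps[of q] Rs[OF that] by blast
    then show ?thesis unfolding G_def by (rule someI2_bex) auto
  qed
  have finR: "finite {w. R w \<noteq> 0}" using Rk kQ_finite by blast
  have L: "lc {w. R w \<noteq> 0} R G \<in> kQ Q \<and> T (lc {w. R w \<noteq> 0} R G) = lc {w. R w \<noteq> 0} R (\<lambda>q. T (G q))"
    by (rule transv_lc[OF finR]) (use G in blast)
  have "lc {w. R w \<noteq> 0} R (\<lambda>q. T (G q)) = lc {w. R w \<noteq> 0} R bp"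
    unfolding lc_def using G by (intro ext sum.cong) auto
  also have "\<dots> = R" using kQ_decomp[OF finR] by simp
  finally have TL: "T (lc {w. R w \<noteq> 0} R G) = R" using L by simp
  define g where "g = kq_add (bp p) (kq_smult (-1) (lc {w. R w \<noteq> 0} R G))"
  have gk: "g \<in> kQ Q" unfolding g_def using L bp_kQ[OF less.prems] by (intro kq_add_kQ kq_smult_kQ) auto
  have "T g = kq_add (T (bp p)) (kq_smult (-1) R)"
  proof -
    have Lk: "lc {w. R w \<noteq> 0} R G \<in> kQ Q" using L by blast
    show ?thesis unfolding g_def transv_add[OF bp_kQ[OF less.prems] kq_smult_kQ[OF Lk]]
      transv_smult[OF Lk] TL ..
  qed
  also have "\<dots> = bp p"
    unfolding transv_bp[OF less.prems] R_def kq_add_def kq_smult_def by auto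
  finally show ?case using gk by blast
qed

lemma transv_surj: "f \<in> kQ Q \<Longrightarrow> \<exists>g\<in>kQ Q. T g = f"
proof -
  assume f: "f \<in> kQ Q"
  define G where "G = (\<lambda>q. SOME g. g \<in> kQ Q \<and> T g = bp q)"
  have G: "G q \<in> kQ Q \<and> T (G q) = bp q" if "f q \<noteq> 0" for q
  proof -
    have "\<exists>g\<in>kQ Q. T g = bp q" using transv_surj_bp kQ_path[OF f that] by blast
    then show ?thesis unfolding G_def by (rule someI2_bex) auto
  qed
  have finf: "finite {w. f w \<noteq> 0}" using f kQ_finite by blast
  have L: "lc {w. f w \<noteq> 0} f G \<in> kQ Q \<and> T (lc {w. f w \<noteq> 0} f G) = lc {w. f w \<noteq> 0} f (\<lambda>q. T (G q))"
    by (rule transv_lc[OF finf]) (use G in blast)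
  have "lc {w. f w \<noteq> 0} f (\<lambda>q. T (G q)) = lc {w. f w \<noteq> 0} f bp"
    unfolding lc_def using G by (intro ext sum.cong) auto
  also have "\<dots> = f" using kQ_decomp[OF finf] by simp
  finally have TL: "T (lc {w. f w \<noteq> 0} f G) = f" using L by simp
  have Lk: "lc {w. f w \<noteq> 0} f G \<in> kQ Q" using L by blast
  show ?thesis using TL Lk by blast
qed

lemma phi_wrel:
  assumes hyp: "wrel Q K (pwalk (arrow_path Q \<alpha>)) (pwalk u)"
  shows "is_path Q (x, bs) \<Longrightarrow> phi x bs w \<noteq> 0 \<Longrightarrow> wrel Q K (pwalk (x, bs)) (pwalk w)"
proof (induction bs arbitrary: x w)
  case Nil
  then have "w = (x, [])" by (simp add: bp_apply split: if_splits)
  then show ?case using Nil.prems(1) by (simp add: wrel_refl is_walk_pwalk)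
next
  case (Cons b bs)
  have b: "b \<in> arrs Q" "src Q b = x" and rp: "is_path Q (tgt Q b, bs)"
    using Cons.prems is_path_Cons[OF fq] by auto
  have "kq_mult Q (phi (tgt Q b) bs) (phA b) w \<noteq> 0" using Cons.prems(2) by simp
  then obtain v u' where v: "is_path Q v" "is_path Q u'" "fst v = pend Q u'" "pcomp v u' = w"
      "phi (tgt Q b) bs v \<noteq> 0" "phA b u' \<noteq> 0"
    by (rule kq_mult_nz)
  have r1: "wrel Q K (pwalk (tgt Q b, bs)) (pwalk v)" by (rule Cons.IH[OF rp v(5)])
  have r2: "wrel Q K (pwalk (arrow_path Q b)) (pwalk u')"
    using phA_supp[OF v(6)] hyp wrel_refl[OF is_walk_pwalk[OF v(2)]] by auto
  have pc: "pcomp (tgt Q b, bs) (arrow_path Q b) = (x, b # bs)"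
    unfolding pcomp_def arrow_path_def using b by simp
  show ?case
  proof (rule wrel_conc'[OF r2 r1])
    show "wend Q (pwalk (arrow_path Q b)) = fst (pwalk (tgt Q b, bs))"
      using arrow_path_props[OF fq b(1)] by (simp add: wend_pwalk)
    show "wend Q (pwalk u') = fst (pwalk v)" using v(3) by (simp add: wend_pwalk)
    show "pwalk (x, b # bs) = wconc (pwalk (arrow_path Q b)) (pwalk (tgt Q b, bs))"
      using pc pwalk_pcomp by metis
    show "pwalk w = wconc (pwalk u') (pwalk v)" using v(4) pwalk_pcomp by metis
  qed
qed

end


locale psetting = tsetting Q \<alpha> u \<tau> for Q :: "('v, 'e) quiver" and \<alpha> u and \<tau> :: "'k::field" +
  fixes eA :: "'v \<Rightarrow> 'a::ring_1" and sm :: "'k \<Rightarrow> 'a \<Rightarrow> 'a" and \<nu> :: "('v \<times> 'e list \<Rightarrow> 'k) \<Rightarrow> 'a"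
  assumes pres: "presentation Q eA sm \<nu>" and kal: "k_algebra sm"
begin

abbreviation "\<mu> \<equiv> \<nu> \<circ> T"
abbreviation "I \<equiv> kerP Q \<nu>"
abbreviation "J \<equiv> kerP Q \<mu>"

lemma nu_add: "f \<in> kQ Q \<Longrightarrow> g \<in> kQ Q \<Longrightarrow> \<nu> (kq_add f g) = \<nu> f + \<nu> g"
  and nu_mult: "f \<in> kQ Q \<Longrightarrow> g \<in> kQ Q \<Longrightarrow> \<nu> (kq_mult Q f g) = \<nu> f * \<nu> g"
  and nu_smult: "f \<in> kQ Q \<Longrightarrow> \<nu> (kq_smult c f) = sm c (\<nu> f)"
  and nu_e: "x \<in> verts Q \<Longrightarrow> \<nu> (bp (x, [])) = eA x"
  using pres unfolding presentation_def by auto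

lemma mu_add: "f \<in> kQ Q \<Longrightarrow> g \<in> kQ Q \<Longrightarrow> \<mu> (kq_add f g) = \<mu> f + \<mu> g"
  by (simp add: transv_add nu_add transv_kQ)

lemma I_Rs_par:
  assumes f: "f \<in> I" and x: "x \<in> verts Q" and y: "y \<in> verts Q"
  shows "Rs {w. fst w = x \<and> pend Q w = y} f \<in> I"
proof -
  have fk: "f \<in> kQ Q" and f0: "\<nu> f = 0" using f unfolding kerP_def by auto
  have e1: "kq_mult Q f (bp (x, [])) = (\<lambda>w. if fst w = x then f w else 0)"
    by (rule kq_mult_right_unit[OF fq fk x])
  have bx: "bp (x, []) \<in> kQ Q" "bp (y, []) \<in> kQ Q" using x y by (auto intro: bp_kQ)
  have f1k: "kq_mult Q f (bp (x, [])) \<in> kQ Q" by (rule kq_mult_kQ[OF fq fk bx(1)])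
  have e2: "kq_mult Q (bp (y, [])) (kq_mult Q f (bp (x, []))) =
     (\<lambda>w. if pend Q w = y then kq_mult Q f (bp (x, [])) w else 0)"
    by (rule kq_mult_left_unit[OF fq f1k y])
  have eq: "Rs {w. fst w = x \<and> pend Q w = y} f = kq_mult Q (bp (y, [])) (kq_mult Q f (bp (x, [])))"
    apply (subst e2) apply (subst e1) unfolding Rs_def by (intro ext) auto
  have a: "\<nu> (kq_mult Q f (bp (x, []))) = 0" using nu_mult[OF fk bx(1)] f0 by simp
  have R0: "\<nu> (Rs {w. fst w = x \<and> pend Q w = y} f) = 0"
    unfolding eq using nu_mult[OF bx(2) f1k] a by simp
  show ?thesis unfolding kerP_def mem_Collect_eq by (rule conjI[OF Rs_kQ[OF fk] R0])
qed

lemma par_cond: "is_path Q p \<Longrightarrow> phi (fst p) (snd p) q \<noteq> 0 \<Longrightarrow>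
   (p \<in> {w. fst w = x \<and> pend Q w = y} \<longleftrightarrow> q \<in> {w. fst w = x \<and> pend Q w = y})"
proof -
  assume a: "is_path Q p" "phi (fst p) (snd p) q \<noteq> 0"
  from phi_supp[OF a] have "fst q = fst p" "pend Q q = pend Q p" by blast+
  then show ?thesis by simp
qed

lemma J_Rs_par:
  assumes f: "f \<in> J" and x: "x \<in> verts Q" and y: "y \<in> verts Q"
  shows "Rs {w. fst w = x \<and> pend Q w = y} f \<in> J"
proof -
  have fk: "f \<in> kQ Q" and f0: "\<nu> (T f) = 0" using f unfolding kerP_def by auto
  have "T f \<in> I" using transv_kQ[OF fk] f0 unfolding kerP_def by simp
  then have "Rs {w. fst w = x \<and> pend Q w = y} (T f) \<in> I" using I_Rs_par x y by blast
  moreover have "T (Rs {w. fst w = x \<and> pend Q w = y} f) = Rs {w. fst w = x \<and> pend Q w = y} (T f)"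
    by (rule transv_Rs[OF fk par_cond])
  ultimately have R0: "\<mu> (Rs {w. fst w = x \<and> pend Q w = y} f) = 0" unfolding kerP_def by simp
  show ?thesis unfolding kerP_def mem_Collect_eq by (rule conjI[OF Rs_kQ[OF fk] R0])
qed

lemma par_gen:
  assumes K: "K \<subseteq> kQ Q" and KR: "\<And>f x y. f \<in> K \<Longrightarrow> x \<in> verts Q \<Longrightarrow> y \<in> verts Q \<Longrightarrow>
      Rs {w. fst w = x \<and> pend Q w = y} f \<in> K"
    and m: "minrel Q K f" and p: "f p \<noteq> 0" and q: "f q \<noteq> 0"
  shows "is_path Q p \<and> is_path Q q \<and> fst p = fst q \<and> pend Q p = pend Q q"
proof -
  have fK: "f \<in> K" using m unfolding minrel_def by simp
  have fk: "f \<in> kQ Q" using fK K by auto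
  have pp: "is_path Q p" "is_path Q q" using kQ_path[OF fk] p q by auto
  have "fst p \<in> verts Q" using pp unfolding is_path_alt by simp
  moreover have "pend Q p \<in> verts Q" using pend_verts[OF fq pp(1)] .
  ultimately have "Rs {w. fst w = fst p \<and> pend Q w = pend Q p} f \<in> K" using KR fK by blast
  from minrel_closed[OF m this p _ q] have "q \<in> {w. fst w = fst p \<and> pend Q w = pend Q p}" by simp
  then show ?thesis using pp by simp
qed

lemma par_I: assumes "minrel Q I f" "f p \<noteq> 0" "f q \<noteq> 0" shows
   "is_path Q p \<and> is_path Q q \<and> fst p = fst q \<and> pend Q p = pend Q q"
proof -
  have K: "I \<subseteq> kQ Q" unfolding kerP_def by auto
  show ?thesis by (rule par_gen[OF K I_Rs_par assms])
qed

lemma par_J: assumes "minrel Q J f" "f p \<noteq> 0" "f q \<noteq> 0" shows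
   "is_path Q p \<and> is_path Q q \<and> fst p = fst q \<and> pend Q p = pend Q q"
proof -
  have K: "J \<subseteq> kQ Q" unfolding kerP_def by auto
  show ?thesis by (rule par_gen[OF K J_Rs_par assms])
qed

lemma winv_I: "wrel Q I w v \<Longrightarrow> is_walk Q w \<and> is_walk Q v \<and> fst w = fst v \<and> wend Q w = wend Q v"
  by (rule wrel_inv[OF fq par_I])

lemma winv_J: "wrel Q J w v \<Longrightarrow> is_walk Q w \<and> is_walk Q v \<and> fst w = fst v \<and> wend Q w = wend Q v"
  by (rule wrel_inv[OF fq par_J])

context
  assumes hypJ: "wrel Q J (pwalk (arrow_path Q \<alpha>)) (pwalk u)"
begin

lemma class_I:
  assumes m: "minrel Q I \<rho>" and p: "\<rho> p \<noteq> 0" and q: "\<rho> q \<noteq> 0"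
  shows "wrel Q J (pwalk p) (pwalk q)"
proof -
  define C where "C = {w. wrel Q J (pwalk p) (pwalk w)}"
  have \<rho>I: "\<rho> \<in> I" using m unfolding minrel_def by simp
  have \<rho>k: "\<rho> \<in> kQ Q" and \<rho>0: "\<nu> \<rho> = 0" using \<rho>I unfolding kerP_def by auto
  obtain \<rho>' where \<rho>'k: "\<rho>' \<in> kQ Q" and T\<rho>': "T \<rho>' = \<rho>" using transv_surj[OF \<rho>k] by blast
  have \<rho>'J: "\<rho>' \<in> J" using \<rho>'k T\<rho>' \<rho>0 unfolding kerP_def by simp
  have Cp: "s \<in> C \<longleftrightarrow> t \<in> C" if "wrel Q J (pwalk s) (pwalk t)" for s t
    using that wrel_sym[OF that] unfolding C_def mem_Collect_eq by (meson wrel_trans)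
  have RJ: "Rs C \<rho>' \<in> J"
  proof (rule kernel_Rs[where M = \<mu>])
    show "\<mu> (kq_add f g) = \<mu> f + \<mu> g" if "f \<in> kQ Q" "g \<in> kQ Q" for f g using mu_add that by blast
    show "s \<in> C \<longleftrightarrow> t \<in> C" if "minrel Q J g" "g s \<noteq> 0" "g t \<noteq> 0" for g s t
      using Cp wrel_minrel[OF that] by blast
  qed (rule \<rho>'J)
  have "T (Rs C \<rho>') = Rs C (T \<rho>')"
  proof (rule transv_Rs[OF \<rho>'k])
    fix p' q' assume "is_path Q p'" "phi (fst p') (snd p') q' \<noteq> 0"
    then have "wrel Q J (pwalk (fst p', snd p')) (pwalk q')"
      using phi_wrel[OF hypJ, of "fst p'" "snd p'" q'] by simp
    then show "p' \<in> C \<longleftrightarrow> q' \<in> C" using Cp by simp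
  qed
  then have E2: "T (Rs C \<rho>') = Rs C \<rho>" unfolding T\<rho>' .
  have "(\<nu> \<circ> T) (Rs C \<rho>') = 0" using RJ unfolding kerP_def by blast
  then have "\<nu> (T (Rs C \<rho>')) = 0" by (simp only: comp_apply)
  then have "\<nu> (Rs C \<rho>) = 0" unfolding E2 .
  then have RI: "Rs C \<rho> \<in> I" unfolding kerP_def mem_Collect_eq by (intro conjI Rs_kQ[OF \<rho>k])
  have pC: "p \<in> C" unfolding C_def using kQ_path[OF \<rho>k p] by (simp add: wrel_refl is_walk_pwalk)
  from minrel_closed[OF m RI p pC q] show ?thesis unfolding C_def by simp
qed

lemma finer: "wrel Q I w v \<Longrightarrow> wrel Q J w v"
proof (induction rule: wrel.induct)
  case (wrel_minrel f p q)
  then show ?case using class_I by blast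
qed (auto intro: wrel.intros)

end

end


lemma wclass_eq: "wrel Q K w v \<Longrightarrow> wclass Q K w = wclass Q K v"
  unfolding wclass_def by (auto intro: wrel_trans wrel_sym)

lemma pi1_mult:
  assumes inv: "\<And>w v. wrel Q K w v \<Longrightarrow> is_walk Q w \<and> is_walk Q v \<and> fst w = fst v \<and> wend Q w = wend Q v"
    and w: "is_walk Q w" "fst w = x0" "wend Q w = x0"
    and v: "is_walk Q v" "fst v = x0" "wend Q v = x0"
  shows "monoid.mult (pi1 Q K x0) (wclass Q K w) (wclass Q K v) = wclass Q K (wconc w v)"
proof -
  have "{z. \<exists>w'\<in>wclass Q K w. \<exists>v'\<in>wclass Q K v. wrel Q K (wconc w' v') z} = wclass Q K (wconc w v)"
  proof (intro equalityI subsetI)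
    fix z assume "z \<in> {z. \<exists>w'\<in>wclass Q K w. \<exists>v'\<in>wclass Q K v. wrel Q K (wconc w' v') z}"
    then obtain w' v' where w': "wrel Q K w w'" and v': "wrel Q K v v'" and z: "wrel Q K (wconc w' v') z"
      unfolding wclass_def by blast
    have "wend Q w' = x0" "fst v' = x0" using inv[OF w'] inv[OF v'] w v by auto
    then have "wrel Q K (wconc w v) (wconc w' v')" using wrel_conc[OF w' v'] w v by simp
    then show "z \<in> wclass Q K (wconc w v)" using z unfolding wclass_def by (auto intro: wrel_trans)
  next
    fix z assume z: "z \<in> wclass Q K (wconc w v)"
    have "w \<in> wclass Q K w" "v \<in> wclass Q K v" using w v unfolding wclass_def by (auto intro: wrel_refl)
    then show "z \<in> {z. \<exists>w'\<in>wclass Q K w. \<exists>v'\<in>wclass Q K v. wrel Q K (wconc w' v') z}"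
      using z unfolding wclass_def by blast
  qed
  then show ?thesis unfolding pi1_def by simp
qed

lemma pi1_carrier: "is_walk Q w \<Longrightarrow> fst w = x0 \<Longrightarrow> wend Q w = x0 \<Longrightarrow> wclass Q K w \<in> carrier (pi1 Q K x0)"
  unfolding pi1_def by auto

lemma hom_add:
  assumes "f \<in> hom G kplus" "a \<in> carrier G" "b \<in> carrier G"
  shows "f (a \<otimes>\<^bsub>G\<^esub> b) = f a + f b"
  using assms unfolding hom_def kplus_def by simp

lemma deriv_ind:
  fixes D :: "'a::ring_1 \<Rightarrow> 'a" and sm :: "'k::field \<Rightarrow> 'a \<Rightarrow> 'a"
  assumes fq: "finite_quiver Q" and Dd: "D \<in> Der0 Q eA sm" and kal: "k_algebra sm"
    and hC: "\<And>x b bs. is_path Q (x, b # bs) \<Longrightarrow> h (x, b # bs) = h (tgt Q b, bs) * k b"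
    and hk: "\<And>b. b \<in> arrs Q \<Longrightarrow> D (k b) = sm (F (arrow_path Q b)) (k b)"
    and h0: "\<And>x. x \<in> verts Q \<Longrightarrow> D (h (x, [])) = sm (F (x, [])) (h (x, []))"
    and Fadd: "\<And>x b bs. is_path Q (x, b # bs) \<Longrightarrow> F (x, b # bs) = F (arrow_path Q b) + F (tgt Q b, bs)"
  shows "is_path Q (x, bs) \<Longrightarrow> D (h (x, bs)) = sm (F (x, bs)) (h (x, bs))"
proof (induction bs arbitrary: x)
  case Nil then show ?case using h0 by simp
next
  case (Cons b bs)
  have b: "b \<in> arrs Q" and r: "is_path Q (tgt Q b, bs)" using Cons.prems is_path_Cons[OF fq] by auto
  have mod: "module sm" using kal unfolding k_algebra_def module_iff_vector_space by simp
  have smm: "\<And>c a b. sm c (a * b) = sm c a * b \<and> sm c (a * b) = a * sm c b"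
    using kal unfolding k_algebra_def by blast
  have Dm: "\<And>a b. D (a * b) = D a * b + a * D b" using Dd unfolding Der0_def by simp
  have "D (h (x, b # bs)) = D (h (tgt Q b, bs)) * k b + h (tgt Q b, bs) * D (k b)"
    using hC[OF Cons.prems] Dm by simp
  also have "\<dots> = sm (F (tgt Q b, bs)) (h (tgt Q b, bs)) * k b + h (tgt Q b, bs) * sm (F (arrow_path Q b)) (k b)"
    using Cons.IH[OF r] hk[OF b] by simp
  also have "\<dots> = sm (F (tgt Q b, bs)) (h (tgt Q b, bs) * k b) + sm (F (arrow_path Q b)) (h (tgt Q b, bs) * k b)"
    using smm by metis
  also have "\<dots> = sm (F (arrow_path Q b) + F (tgt Q b, bs)) (h (tgt Q b, bs) * k b)"
    using module.scale_left_distrib[OF mod] by (simp add: add.commute)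
  also have "\<dots> = sm (F (x, b # bs)) (h (x, b # bs))" using Fadd[OF Cons.prems] hC[OF Cons.prems] by simp
  finally show ?case .
qed

context psetting
begin

lemma mod: "module sm" using kal unfolding k_algebra_def module_iff_vector_space by simp

lemma nuC: "is_path Q (x, b # bs) \<Longrightarrow> \<nu> (bp (x, b # bs)) = \<nu> (bp (tgt Q b, bs)) * \<nu> (bp (arrow_path Q b))"
proof -
  assume p: "is_path Q (x, b # bs)"
  have b: "b \<in> arrs Q" "src Q b = x" and r: "is_path Q (tgt Q b, bs)" using p is_path_Cons[OF fq] by auto
  have "kq_mult Q (bp (tgt Q b, bs)) (bp (arrow_path Q b)) = bp (pcomp (tgt Q b, bs) (arrow_path Q b))"
    by (rule kq_mult_bp_bp[OF fq r arrow_path_props(1)[OF fq b(1)]]) (simp add: arrow_path_props[OF fq b(1)])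
  moreover have "pcomp (tgt Q b, bs) (arrow_path Q b) = (x, b # bs)"
    unfolding pcomp_def arrow_path_def using b by simp
  ultimately have e: "kq_mult Q (bp (tgt Q b, bs)) (bp (arrow_path Q b)) = bp (x, b # bs)" by simp
  show ?thesis
    using nu_mult[OF bp_kQ[OF r] bp_kQ[OF arrow_path_props(1)[OF fq b(1)]]] unfolding e .
qed

lemma muC: "is_path Q (x, b # bs) \<Longrightarrow> \<mu> (bp (x, b # bs)) = \<mu> (bp (tgt Q b, bs)) * \<nu> (phA b)"
proof -
  assume p: "is_path Q (x, b # bs)"
  have b: "b \<in> arrs Q" "src Q b = x" and r: "is_path Q (tgt Q b, bs)" using p is_path_Cons[OF fq] by auto
  have "\<mu> (bp (x, b # bs)) = \<nu> (kq_mult Q (phi (tgt Q b) bs) (phA b))"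
    using transv_bp[OF p] by simp
  also have "\<dots> = \<nu> (phi (tgt Q b) bs) * \<nu> (phA b)"
    using nu_mult[OF phi_kQ[OF r] phA_kQ[OF b(1)]] by simp
  also have "\<nu> (phi (tgt Q b) bs) = \<mu> (bp (tgt Q b, bs))" using transv_bp[OF r] by simp
  finally show ?thesis .
qed

lemma mu0: "x \<in> verts Q \<Longrightarrow> \<mu> (bp (x, [])) = \<nu> (bp (x, []))"
  using transv_bp[of "(x, [])"] by simp

lemma muA: "b \<in> arrs Q \<Longrightarrow> \<mu> (bp (arrow_path Q b)) = \<nu> (phA b)"
  using transv_bp[OF arrow_path_props(1)[OF fq]] phi_single unfolding arrow_path_def by simp

lemma phA_ne: "b \<noteq> \<alpha> \<Longrightarrow> \<nu> (phA b) = \<nu> (bp (arrow_path Q b))"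
  unfolding phi_arrow_def by simp

lemma phA_al: "\<nu> (phA \<alpha>) = \<nu> (bp (arrow_path Q \<alpha>)) + sm \<tau> (\<nu> (bp u))"
proof -
  have k1: "bp (arrow_path Q \<alpha>) \<in> kQ Q" by (rule bp_kQ[OF arrow_path_props(1)[OF fq alpha_arr]])
  have k2: "bp u \<in> kQ Q" by (rule bp_kQ[OF u_path])
  show ?thesis unfolding phi_arrow_def using nu_add[OF k1 kq_smult_kQ[OF k2]] nu_smult[OF k2] by simp
qed

lemma mu_u: "\<mu> (bp u) = \<nu> (bp u)"
proof -
  have "is_path Q (fst u, snd u)" using u_path by simp
  from phi_nocc[OF this alpha_notin_u] show ?thesis using transv_bp[OF u_path] by simp
qed

lemma D_diff: "D \<in> Der0 Q eA sm \<Longrightarrow> D (a - b) = D a - D b"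
proof -
  assume "D \<in> Der0 Q eA sm"
  then have "D ((a - b) + b) = D (a - b) + D b" unfolding Der0_def by blast
  then show ?thesis by (simp add: eq_diff_eq)
qed

lemma equiv_deriv:
  assumes Dd: "D \<in> Der0 Q eA sm"
    and Fadd: "\<And>x b bs. is_path Q (x, b # bs) \<Longrightarrow> F (x, b # bs) = F (arrow_path Q b) + F (tgt Q b, bs)"
    and Fu: "F u = F (arrow_path Q \<alpha>)"
  shows "(\<forall>p. is_path Q p \<longrightarrow> D (\<mu> (bp p)) = sm (F p) (\<mu> (bp p))) \<longleftrightarrow>
         (\<forall>p. is_path Q p \<longrightarrow> D (\<nu> (bp p)) = sm (F p) (\<nu> (bp p)))"
proof -
  have Ds: "\<And>c a. D (sm c a) = sm c (D a)" and Da: "\<And>a b. D (a + b) = D a + D b"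
    using Dd unfolding Der0_def by auto
  note sd = module.scale_right_distrib[OF mod] module.scale_right_diff_distrib[OF mod]
    module.scale_scale[OF mod]
  have up: "is_path Q (fst u, snd u)" using u_path by simp
  have ap: "is_path Q (arrow_path Q \<alpha>)" by (rule arrow_path_props(1)[OF fq alpha_arr])
  show ?thesis
  proof
    assume H: "\<forall>p. is_path Q p \<longrightarrow> D (\<mu> (bp p)) = sm (F p) (\<mu> (bp p))"
    have hk: "D (\<nu> (bp (arrow_path Q b))) = sm (F (arrow_path Q b)) (\<nu> (bp (arrow_path Q b)))"
      if b: "b \<in> arrs Q" for b
    proof (cases "b = \<alpha>")
      case False
      then show ?thesis using H[rule_format, OF arrow_path_props(1)[OF fq b]] muA[OF b] phA_ne[OF False] by simp
    next
      case True
      have e: "\<nu> (bp (arrow_path Q \<alpha>)) = \<mu> (bp (arrow_path Q \<alpha>)) - sm \<tau> (\<mu> (bp u))"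
        using phA_al muA[OF alpha_arr] mu_u by simp
      have "D (\<nu> (bp (arrow_path Q \<alpha>))) = sm (F (arrow_path Q \<alpha>)) (\<mu> (bp (arrow_path Q \<alpha>))) - sm \<tau> (sm (F u) (\<mu> (bp u)))"
        unfolding e D_diff[OF Dd] Ds using H[rule_format, OF ap] H[rule_format, OF u_path] by simp
      also have "\<dots> = sm (F (arrow_path Q \<alpha>)) (\<nu> (bp (arrow_path Q \<alpha>)))"
        unfolding e Fu sd by (simp add: mult.commute)
      finally show ?thesis using True by simp
    qed
    show "\<forall>p. is_path Q p \<longrightarrow> D (\<nu> (bp p)) = sm (F p) (\<nu> (bp p))"
    proof (intro allI impI)
      fix p assume p: "is_path Q p"
      have pp: "is_path Q (fst p, snd p)" using p by simp
      have h0: "D (\<nu> (bp (x, []))) = sm (F (x, [])) (\<nu> (bp (x, [])))" if x: "x \<in> verts Q" for x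
        using H[rule_format, of "(x, [])"] mu0[OF x] x by simp
      from deriv_ind[OF fq Dd kal, where h = "\<lambda>p. \<nu> (bp p)" and k = "\<lambda>b. \<nu> (bp (arrow_path Q b))" and F = F,
           OF nuC hk h0 Fadd pp]
      show "D (\<nu> (bp p)) = sm (F p) (\<nu> (bp p))" by simp
    qed
  next
    assume H: "\<forall>p. is_path Q p \<longrightarrow> D (\<nu> (bp p)) = sm (F p) (\<nu> (bp p))"
    have hk: "D (\<nu> (phA b)) = sm (F (arrow_path Q b)) (\<nu> (phA b))"
      if b: "b \<in> arrs Q" for b
    proof (cases "b = \<alpha>")
      case False
      then show ?thesis using H[rule_format, OF arrow_path_props(1)[OF fq b]] phA_ne[OF False] by simp
    next
      case True
      have "D (\<nu> (phA \<alpha>)) = sm (F (arrow_path Q \<alpha>)) (\<nu> (bp (arrow_path Q \<alpha>))) + sm \<tau> (sm (F u) (\<nu> (bp u)))"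
        unfolding phA_al Da Ds using H[rule_format, OF ap] H[rule_format, OF u_path] by simp
      also have "\<dots> = sm (F (arrow_path Q \<alpha>)) (\<nu> (phA \<alpha>))"
        unfolding phA_al Fu sd by (simp add: mult.commute)
      finally show ?thesis using True by simp
    qed
    show "\<forall>p. is_path Q p \<longrightarrow> D (\<mu> (bp p)) = sm (F p) (\<mu> (bp p))"
    proof (intro allI impI)
      fix p assume p: "is_path Q p"
      have pp: "is_path Q (fst p, snd p)" using p by simp
      have h0: "D (\<mu> (bp (x, []))) = sm (F (x, [])) (\<mu> (bp (x, [])))" if x: "x \<in> verts Q" for x
        using H[rule_format, of "(x, [])"] mu0[OF x] x by simp
      from deriv_ind[OF fq Dd kal, where h = "\<lambda>p. \<mu> (bp p)" and k = "\<lambda>b. \<nu> (phA b)" and F = F,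
           OF muC hk h0 Fadd pp]
      show "D (\<mu> (bp p)) = sm (F p) (\<mu> (bp p))" by simp
    qed
  qed
qed

end


context psetting
begin

context
  fixes x0 :: 'v and \<gamma> :: "'v \<Rightarrow> 'v \<times> ('e \<times> bool) list"
  assumes hypJ: "wrel Q J (pwalk (arrow_path Q \<alpha>)) (pwalk u)"
    and x0v: "x0 \<in> verts Q" and tw: "tree_walks Q x0 \<gamma>"
begin

lemma gam: "x \<in> verts Q \<Longrightarrow> is_walk Q (\<gamma> x) \<and> fst (\<gamma> x) = x0 \<and> wend Q (\<gamma> x) = x"
proof -
  assume x: "x \<in> verts Q"
  obtain T where T: "spanning_tree Q T" and g: "\<forall>x\<in>verts Q. is_walk_in Q T (\<gamma> x) \<and> fst (\<gamma> x) = x0 \<and> wend Q (\<gamma> x) = x"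
    using tw unfolding tree_walks_def by blast
  have Ts: "T \<subseteq> arrs Q" using T unfolding spanning_tree_def by blast
  have "is_walk_in Q T (\<gamma> x)" "fst (\<gamma> x) = x0" "wend Q (\<gamma> x) = x" using g x by auto
  then show ?thesis using walk_chain_mono[OF Ts] unfolding is_walk_in_def is_walk_def by auto
qed

definition Wd :: "'v \<times> 'e list \<Rightarrow> 'v \<times> ('e \<times> bool) list" where
  "Wd p = wconc (wconc (\<gamma> (fst p)) (pwalk p)) (winv Q (\<gamma> (pend Q p)))"

lemma W_walk:
  assumes p: "is_path Q p"
  shows "is_walk Q (Wd p) \<and> fst (Wd p) = x0 \<and> wend Q (Wd p) = x0"
proof -
  have fv: "fst p \<in> verts Q" using p unfolding is_path_alt by simp
  have ev: "pend Q p \<in> verts Q" by (rule pend_verts[OF fq p])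
  note g1 = gam[OF fv] and g2 = gam[OF ev]
  have w1: "is_walk Q (wconc (\<gamma> (fst p)) (pwalk p))"
    by (rule is_walk_wconc) (use g1 is_walk_pwalk[OF p] in auto)
  have e1: "wend Q (wconc (\<gamma> (fst p)) (pwalk p)) = pend Q p"
    using wend_wconc[of Q "\<gamma> (fst p)" "pwalk p"] g1 by (simp add: wend_pwalk)
  have wi: "is_walk Q (winv Q (\<gamma> (pend Q p)))" "fst (winv Q (\<gamma> (pend Q p))) = pend Q p"
    "wend Q (winv Q (\<gamma> (pend Q p))) = x0"
    using is_walk_winv[OF fq, of "\<gamma> (pend Q p)"] g2 by auto
  show ?thesis unfolding Wd_def using w1 e1 wi g1
    by (auto intro!: is_walk_wconc simp: wend_wconc)
qed

lemma W_split:
  assumes p: "is_path Q (x, b # bs)"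
  shows "wrel Q K (wconc (Wd (arrow_path Q b)) (Wd (tgt Q b, bs))) (Wd (x, b # bs))"
proof -
  have b: "b \<in> arrs Q" "src Q b = x" and r: "is_path Q (tgt Q b, bs)" using p is_path_Cons[OF fq] by auto
  have xv: "x \<in> verts Q" using p unfolding is_path_alt by simp
  have yv: "tgt Q b \<in> verts Q" using r unfolding is_path_alt by simp
  have zv: "pend Q (tgt Q b, bs) \<in> verts Q" by (rule pend_verts[OF fq r])
  define y where "y = tgt Q b"
  define z where "z = pend Q (tgt Q b, bs)"
  define A where "A = wconc (\<gamma> x) (pwalk (arrow_path Q b))"
  define M where "M = wconc (winv Q (\<gamma> y)) (\<gamma> y)"
  define B where "B = wconc (pwalk (tgt Q b, bs)) (winv Q (\<gamma> z))"
  note gx = gam[OF xv] and gy = gam[OF yv[folded y_def]] and gz = gam[OF zv[folded z_def]]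
  have ap: "is_path Q (arrow_path Q b)" "fst (arrow_path Q b) = src Q b" "pend Q (arrow_path Q b) = tgt Q b"
    using arrow_path_props[OF fq b(1)] by auto
  have wA: "is_walk Q A" unfolding A_def
    by (rule is_walk_wconc) (use gx is_walk_pwalk[OF ap(1)] ap b in auto)
  have eA: "wend Q A = y" unfolding A_def y_def using wend_wconc[of Q "\<gamma> x" "pwalk (arrow_path Q b)"] gx ap b
    by (simp add: wend_pwalk)
  have wiy: "is_walk Q (winv Q (\<gamma> y))" "fst (winv Q (\<gamma> y)) = y" "wend Q (winv Q (\<gamma> y)) = x0"
    using is_walk_winv[OF fq, of "\<gamma> y"] gy by auto
  have eM: "wend Q M = y" "fst M = y" unfolding M_def using wend_wconc[of Q "winv Q (\<gamma> y)" "\<gamma> y"] wiy gy by auto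
  have M1: "wrel Q K M (y, [])" unfolding M_def using wrel_winv_w[OF fq, of "\<gamma> y" K] gy by simp
  have wiz: "is_walk Q (winv Q (\<gamma> z))" "fst (winv Q (\<gamma> z)) = z"
    using is_walk_winv[OF fq, of "\<gamma> z"] gz by auto
  have wB: "is_walk Q B" unfolding B_def
    by (rule is_walk_wconc) (use is_walk_pwalk[OF r] wiz in \<open>auto simp: wend_pwalk z_def\<close>)
  have fB: "fst B = y" unfolding B_def y_def by simp
  have s1: "wrel Q K (wconc A M) A"
    by (rule wrel_conc'[OF wrel_refl[OF wA] M1]) (auto simp: eA eM)
  have s2: "wrel Q K (wconc (wconc A M) B) (wconc A B)"
    by (rule wrel_conc'[OF s1 wrel_refl[OF wB]]) (auto simp: eA eM fB wend_wconc)
  have e1: "wconc (Wd (arrow_path Q b)) (Wd (tgt Q b, bs)) = wconc (wconc A M) B"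
    unfolding Wd_def A_def M_def B_def y_def z_def using ap b by (simp add: wconc_def)
  have e2: "wconc A B = Wd (x, b # bs)"
    unfolding Wd_def A_def B_def z_def using b by (simp add: wconc_def pwalk_def arrow_path_def)
  show ?thesis using s2 unfolding e1 e2 .
qed

lemma W_u: "wrel Q J (Wd (arrow_path Q \<alpha>)) (Wd u)"
proof -
  have ap: "is_path Q (arrow_path Q \<alpha>)" "fst (arrow_path Q \<alpha>) = src Q \<alpha>" "pend Q (arrow_path Q \<alpha>) = tgt Q \<alpha>"
    using arrow_path_props[OF fq alpha_arr] by auto
  have sv: "src Q \<alpha> \<in> verts Q" "tgt Q \<alpha> \<in> verts Q" using fq alpha_arr unfolding finite_quiver_def by auto
  note g1 = gam[OF sv(1)] and g2 = gam[OF sv(2)]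
  have wi: "is_walk Q (winv Q (\<gamma> (tgt Q \<alpha>)))" using is_walk_winv[OF fq] g2 by auto
  have s1: "wrel Q J (wconc (\<gamma> (src Q \<alpha>)) (pwalk (arrow_path Q \<alpha>))) (wconc (\<gamma> (src Q \<alpha>)) (pwalk u))"
    by (rule wrel_conc'[OF wrel_refl hypJ]) (use g1 ap u_fst in \<open>auto simp: wend_pwalk\<close>)
  have s2: "wrel Q J (Wd (arrow_path Q \<alpha>)) (Wd u)"
    unfolding Wd_def
    by (rule wrel_conc'[OF s1 wrel_refl[OF wi]])
       (use g1 ap u_fst u_pend is_walk_winv[OF fq, of "\<gamma> (tgt Q \<alpha>)"] g2 in \<open>auto simp: wend_pwalk wend_wconc\<close>)
  show ?thesis by (rule s2)
qed

lemma Fadd: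
  assumes f: "f \<in> hom (pi1 Q J x0) kplus" and p: "is_path Q (x, b # bs)"
  shows "f (wclass Q J (Wd (x, b # bs))) = f (wclass Q J (Wd (arrow_path Q b))) + f (wclass Q J (Wd (tgt Q b, bs)))"
proof -
  have b: "b \<in> arrs Q" "src Q b = x" and r: "is_path Q (tgt Q b, bs)" using p is_path_Cons[OF fq] by auto
  have ap: "is_path Q (arrow_path Q b)" using arrow_path_props[OF fq b(1)] by auto
  note w1 = W_walk[OF ap] and w2 = W_walk[OF r]
  have "wclass Q J (Wd (x, b # bs)) = wclass Q J (wconc (Wd (arrow_path Q b)) (Wd (tgt Q b, bs)))"
    by (rule sym[OF wclass_eq[OF W_split[OF p]]])
  also have "\<dots> = monoid.mult (pi1 Q J x0) (wclass Q J (Wd (arrow_path Q b))) (wclass Q J (Wd (tgt Q b, bs)))"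
    using w1 w2 by (intro sym[OF pi1_mult[OF winv_J]]) auto
  finally have eq: "wclass Q J (Wd (x, b # bs)) = monoid.mult (pi1 Q J x0) (wclass Q J (Wd (arrow_path Q b))) (wclass Q J (Wd (tgt Q b, bs)))" .
  have c1: "wclass Q J (Wd (arrow_path Q b)) \<in> carrier (pi1 Q J x0)"
    using w1 by (intro pi1_carrier) auto
  have c2: "wclass Q J (Wd (tgt Q b, bs)) \<in> carrier (pi1 Q J x0)"
    using w2 by (intro pi1_carrier) auto
  show ?thesis unfolding eq by (rule hom_add[OF f c1 c2])
qed

lemma pmap_class:
  assumes w: "is_walk Q w"
  shows "pmap Q J (wclass Q I w) = wclass Q J w"
proof (intro equalityI subsetI)
  fix z assume "z \<in> pmap Q J (wclass Q I w)"
  then obtain w' where a: "wrel Q I w w'" and b: "wrel Q J w' z" unfolding pmap_def wclass_def by blast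
  have "wrel Q J w w'" by (rule finer[OF hypJ a])
  then have "wrel Q J w z" using b by (rule wrel_trans)
  then show "z \<in> wclass Q J w" unfolding wclass_def by simp
next
  fix z assume "z \<in> wclass Q J w"
  then have "wrel Q J w z" unfolding wclass_def by simp
  moreover have "w \<in> wclass Q I w" unfolding wclass_def using wrel_refl[OF w] by simp
  ultimately show "z \<in> pmap Q J (wclass Q I w)" unfolding pmap_def by blast
qed

lemma ftilde_iff:
  assumes f: "f \<in> hom (pi1 Q J x0) kplus"
  shows "ftilde Q eA sm \<mu> x0 \<gamma> f D \<longleftrightarrow> ftilde Q eA sm \<nu> x0 \<gamma> (f \<circ> pmap Q J) D"
proof -
  define F where "F p = f (wclass Q J (Wd p))" for p
  have e1: "ftilde Q eA sm \<mu> x0 \<gamma> f D \<longleftrightarrow> D \<in> Der0 Q eA sm \<and>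
      (\<forall>p. is_path Q p \<longrightarrow> D (\<mu> (bp p)) = sm (F p) (\<mu> (bp p)))"
    unfolding ftilde_def F_def Wd_def by simp
  have e2: "ftilde Q eA sm \<nu> x0 \<gamma> (f \<circ> pmap Q J) D \<longleftrightarrow> D \<in> Der0 Q eA sm \<and>
      (\<forall>p. is_path Q p \<longrightarrow> D (\<nu> (bp p)) = sm (F p) (\<nu> (bp p)))"
  proof -
    have "(f \<circ> pmap Q J) (wclass Q I (Wd p)) = F p" if "is_path Q p" for p
      using pmap_class W_walk[OF that] unfolding F_def by simp
    then show ?thesis unfolding ftilde_def Wd_def[symmetric] by auto
  qed
  have Fa: "F (x, b # bs) = F (arrow_path Q b) + F (tgt Q b, bs)" if "is_path Q (x, b # bs)" for x b bs
    unfolding F_def by (rule Fadd[OF f that])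
  have Fu: "F u = F (arrow_path Q \<alpha>)" unfolding F_def using wclass_eq[OF W_u] by simp
  show ?thesis unfolding e1 e2 using equiv_deriv[OF _ Fa Fu] by blast
qed

lemma theta_eq:
  assumes f: "f \<in> hom (pi1 Q J x0) kplus"
  shows "theta Q eA sm \<mu> x0 \<gamma> f = theta Q eA sm \<nu> x0 \<gamma> (f \<circ> pmap Q J)"
  unfolding theta_def using ftilde_iff[OF f] by simp

lemma hom_comp:
  assumes f: "f \<in> hom (pi1 Q J x0) kplus"
  shows "f \<circ> pmap Q J \<in> hom (pi1 Q I x0) kplus"
proof -
  have "(f \<circ> pmap Q J) (monoid.mult (pi1 Q I x0) C D') = (f \<circ> pmap Q J) C + (f \<circ> pmap Q J) D'"
    if C: "C \<in> carrier (pi1 Q I x0)" and D: "D' \<in> carrier (pi1 Q I x0)" for C D'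
  proof -
    obtain w where w: "C = wclass Q I w" "is_walk Q w" "fst w = x0" "wend Q w = x0"
      using C unfolding pi1_def by auto
    obtain v where v: "D' = wclass Q I v" "is_walk Q v" "fst v = x0" "wend Q v = x0"
      using D unfolding pi1_def by auto
    have wv: "is_walk Q (wconc w v)" "fst (wconc w v) = x0" "wend Q (wconc w v) = x0"
      using is_walk_wconc[OF w(2) v(2)] wend_wconc[of Q w v] w v by auto
    have "monoid.mult (pi1 Q I x0) C D' = wclass Q I (wconc w v)"
      unfolding w(1) v(1) by (rule pi1_mult[OF winv_I w(2-4) v(2-4)])
    then have "(f \<circ> pmap Q J) (monoid.mult (pi1 Q I x0) C D') = f (wclass Q J (wconc w v))"
      using pmap_class[OF wv(1)] by simp
    also have "\<dots> = f (monoid.mult (pi1 Q J x0) (wclass Q J w) (wclass Q J v))"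
      using pi1_mult[where K = J, OF winv_J w(2-4) v(2-4)] by simp
    also have "\<dots> = f (wclass Q J w) + f (wclass Q J v)"
      by (rule hom_add[OF f pi1_carrier[OF w(2-4)] pi1_carrier[OF v(2-4)]])
    also have "\<dots> = (f \<circ> pmap Q J) C + (f \<circ> pmap Q J) D'"
      using pmap_class w v by simp
    finally show ?thesis .
  qed
  then show ?thesis unfolding hom_def kplus_def by auto
qed

end

end


lemma main_aux:
  fixes Q :: "('v, 'e) quiver" and eA :: "'v \<Rightarrow> 'a::ring_1" and sm :: "'k::field \<Rightarrow> 'a \<Rightarrow> 'a"
    and \<nu> :: "('v \<times> 'e list \<Rightarrow> 'k) \<Rightarrow> 'a" and \<alpha> :: 'e and u :: "'v \<times> 'e list" and \<tau> :: 'k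
    and x0 :: 'v and \<gamma> :: "'v \<Rightarrow> 'v \<times> ('e \<times> bool) list"
  assumes fq: "finite_quiver Q" and nc: "no_oriented_cycles Q" and pr: "presentation Q eA sm \<nu>"
    and ka: "k_algebra sm" and byps: "bypass Q \<alpha> u" and x0: "x0 \<in> verts Q" and tw: "tree_walks Q x0 \<gamma>"
    and h: "wrel Q (kerP Q (\<nu> \<circ> transv Q \<alpha> u \<tau>)) (pwalk (arrow_path Q \<alpha>)) (pwalk u)"
  shows "(\<forall>f \<in> hom (pi1 Q (kerP Q (\<nu> \<circ> transv Q \<alpha> u \<tau>)) x0) kplus.
            theta Q eA sm (\<nu> \<circ> transv Q \<alpha> u \<tau>) x0 \<gamma> f = theta Q eA sm \<nu> x0 \<gamma> (f \<circ> pmap Q (kerP Q (\<nu> \<circ> transv Q \<alpha> u \<tau>))))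
       \<and> theta Q eA sm (\<nu> \<circ> transv Q \<alpha> u \<tau>) x0 \<gamma> ` hom (pi1 Q (kerP Q (\<nu> \<circ> transv Q \<alpha> u \<tau>)) x0) kplus
           \<subseteq> theta Q eA sm \<nu> x0 \<gamma> ` hom (pi1 Q (kerP Q \<nu>) x0) kplus"
proof -
  interpret psetting Q \<alpha> u \<tau> eA sm \<nu>
    by unfold_locales (rule fq byps nc pr ka)+
  have A: "\<forall>f \<in> hom (pi1 Q (kerP Q (\<nu> \<circ> transv Q \<alpha> u \<tau>)) x0) kplus.
            theta Q eA sm (\<nu> \<circ> transv Q \<alpha> u \<tau>) x0 \<gamma> f = theta Q eA sm \<nu> x0 \<gamma> (f \<circ> pmap Q (kerP Q (\<nu> \<circ> transv Q \<alpha> u \<tau>)))"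
    using theta_eq[OF h x0 tw] by blast
  have B: "theta Q eA sm (\<nu> \<circ> transv Q \<alpha> u \<tau>) x0 \<gamma> ` hom (pi1 Q (kerP Q (\<nu> \<circ> transv Q \<alpha> u \<tau>)) x0) kplus
           \<subseteq> theta Q eA sm \<nu> x0 \<gamma> ` hom (pi1 Q (kerP Q \<nu>) x0) kplus"
  proof
    fix t assume "t \<in> theta Q eA sm (\<nu> \<circ> transv Q \<alpha> u \<tau>) x0 \<gamma> ` hom (pi1 Q (kerP Q (\<nu> \<circ> transv Q \<alpha> u \<tau>)) x0) kplus"
    then obtain f where f: "f \<in> hom (pi1 Q (kerP Q (\<nu> \<circ> transv Q \<alpha> u \<tau>)) x0) kplus"
      and t: "t = theta Q eA sm (\<nu> \<circ> transv Q \<alpha> u \<tau>) x0 \<gamma> f" by blast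
    have "t = theta Q eA sm \<nu> x0 \<gamma> (f \<circ> pmap Q (kerP Q (\<nu> \<circ> transv Q \<alpha> u \<tau>)))"
      using t theta_eq[OF h x0 tw f] by simp
    moreover have "f \<circ> pmap Q (kerP Q (\<nu> \<circ> transv Q \<alpha> u \<tau>)) \<in> hom (pi1 Q (kerP Q \<nu>) x0) kplus"
      by (rule hom_comp[OF h x0 tw f])
    ultimately show "t \<in> theta Q eA sm \<nu> x0 \<gamma> ` hom (pi1 Q (kerP Q \<nu>) x0) kplus" by blast
  qed
  show ?thesis using A B by blast
qed

theorem proposition3p2:
  fixes Q :: "('v, 'e) quiver" and eA :: "'v \<Rightarrow> 'a::ring_1" and sm :: "'k::field \<Rightarrow> 'a \<Rightarrow> 'a"
    and \<nu> :: "('v \<times> 'e list \<Rightarrow> 'k) \<Rightarrow> 'a" and \<alpha> :: 'e and u :: "'v \<times> 'e list" and \<tau> :: 'k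
    and x0 :: 'v and \<gamma> :: "'v \<Rightarrow> 'v \<times> ('e \<times> bool) list"
  defines "\<mu> \<equiv> \<nu> \<circ> transv Q \<alpha> u \<tau>"
  defines "I \<equiv> kerP Q \<nu>"
  defines "J \<equiv> kerP Q \<mu>"
  assumes "alg_closed TYPE('k)"
    and "k_algebra sm"
    and "finite_quiver Q" and "quiver_connected Q" and "no_oriented_cycles Q"
    and "presentation Q eA sm \<nu>"
    and "bypass Q \<alpha> u"
    and "x0 \<in> verts Q" and "tree_walks Q x0 \<gamma>"
    and "wrel Q J (pwalk (arrow_path Q \<alpha>)) (pwalk u)"
  shows "(\<forall>f \<in> hom (pi1 Q J x0) kplus.
            theta Q eA sm \<mu> x0 \<gamma> f = theta Q eA sm \<nu> x0 \<gamma> (f \<circ> pmap Q J))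
       \<and> theta Q eA sm \<mu> x0 \<gamma> ` hom (pi1 Q J x0) kplus
           \<subseteq> theta Q eA sm \<nu> x0 \<gamma> ` hom (pi1 Q I x0) kplus"
  using main_aux[OF assms(6) assms(8) assms(9) assms(5) assms(10) assms(11) assms(12) assms(13)[unfolded J_def \<mu>_def]]
  unfolding J_def \<mu>_def I_def .


end
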